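(* Let $\mathcal{A}=(\mathcal{E},\{M_i\}_{i\in\mathcal{O}})$ be a quantum decision model with Kraus form $\mathcal{E}(\rho)=\sum_jE_j\rho E_j^\dagger$. (1) The Lipschitz constant of $\mathcal{A}$ is \[K^*=\max_{A\subseteq\mathcal{O}}\big[\lambda_{\max}(M_A)-\lambda_{\min}(M_A)\big],\qquad M_A=\sum_{i\in A}\mathcal{E}^\dagger(M_i^\dagger M_i),\] where $\mathcal{E}^\dagger(X)=\sum_jE_j^\dagger XE_j$ and $\lambda_{\max},\lambda_{\min}$ denote the largest and smallest eigenvalues of the positive semidefinite matrix $M_A$ (with $M_\emptyset=0$). (2) Let $A^*\subseteq\mathcal{O}$ attain this maximum, and let $|\psi\rangle,|\phi\rangle$ be normalized eigenvectors of $M_{A^*}$ for its largest and smallest eigenvalues respectively (chosen mutually orthogonal). Then, with $\psi=|\psi\rangle\langle\psi|$ and $\phi=|\phi\rangle\langle\phi|$, \[ d(\mathcal{A}(\psi),\mathcal{A}(\phi))=K^*D(\psi,\phi)=K^*. \]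
   Context: $\mathcal{H}$ is a Hilbert space of finite dimension $N$, $\mathcal{D}(\mathcal{H})$ its density matrices. A quantum decision model $\mathcal{A}=(\mathcal{E},\{M_i\}_{i\in\mathcal{O}})$ consists of a completely positive trace-preserving map $\mathcal{E}$ and a measurement $\{M_i\}_{i\in\mathcal{O}}$ ($\mathcal{O}$ finite, $\sum_iM_i^\dagger M_i=I$) and maps $\rho$ to $\mathcal{A}(\rho)=\{\mathrm{tr}(M_i\mathcal{E}(\rho)M_i^\dagger)\}_{i\in\mathcal{O}}$. $D(\rho,\sigma)=\frac12\mathrm{tr}|\rho-\sigma|$; $d(p,q)=\frac12\sum_i|p_i-q_i|$. The Lipschitz constant $K^*$ of $\mathcal{A}$ is the smallest $K\ge0$ with $d(\mathcal{A}(\rho),\mathcal{A}(\sigma))\le KD(\rho,\sigma)$ for all $\rho,\sigma\in\mathcal{D}(\mathcal{H})$. *)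

theory Defs
  imports "Jordan_Normal_Form.Matrix" "Jordan_Normal_Form.Char_Poly"
begin

definition dag :: "complex mat \<Rightarrow> complex mat" where
  "dag A = mat (dim_col A) (dim_row A) (\<lambda>(i,j). cnj (A $$ (j,i)))"

definition mtrace :: "complex mat \<Rightarrow> complex" where
  "mtrace A = (\<Sum>i<dim_row A. A $$ (i,i))"

definition msum :: "nat \<Rightarrow> complex mat list \<Rightarrow> complex mat" where
  "msum n xs = foldr (+) xs (0\<^sub>m n n)"

definition psd :: "nat \<Rightarrow> complex mat \<Rightarrow> bool" where
  "psd n A \<longleftrightarrow> A \<in> carrier_mat n n \<and> dag A = A \<and>
     (\<forall>v \<in> carrier_vec n. Im ((A *\<^sub>v v) \<bullet>c v) = 0 \<and> 0 \<le> Re ((A *\<^sub>v v) \<bullet>c v))"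

definition density :: "nat \<Rightarrow> complex mat \<Rightarrow> bool" where
  "density n \<rho> \<longleftrightarrow> psd n \<rho> \<and> mtrace \<rho> = 1"

definition mabs :: "complex mat \<Rightarrow> complex mat" where
  "mabs X = (THE S. psd (dim_col X) S \<and> S * S = dag X * X)"

definition trace_norm :: "complex mat \<Rightarrow> real" where
  "trace_norm X = Re (mtrace (mabs X))"

definition trace_dist :: "complex mat \<Rightarrow> complex mat \<Rightarrow> real" where
  "trace_dist \<rho> \<sigma> = trace_norm (\<rho> - \<sigma>) / 2"

(* Quantum decision model: CPTP map in Kraus form with Kraus operators Es,
   measurement operators Ms (outcome set O = {0..<length Ms}) *)
definition decision_model :: "nat \<Rightarrow> complex mat list \<Rightarrow> complex mat list \<Rightarrow> bool" where
  "decision_model n Es Ms \<longleftrightarrow>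
     (\<forall>E \<in> set Es. E \<in> carrier_mat n n) \<and>
     msum n (map (\<lambda>E. dag E * E) Es) = 1\<^sub>m n \<and>
     (\<forall>M \<in> set Ms. M \<in> carrier_mat n n) \<and>
     msum n (map (\<lambda>M. dag M * M) Ms) = 1\<^sub>m n"

definition channel :: "nat \<Rightarrow> complex mat list \<Rightarrow> complex mat \<Rightarrow> complex mat" where
  "channel n Es \<rho> = msum n (map (\<lambda>E. E * \<rho> * dag E) Es)"

definition adj_channel :: "nat \<Rightarrow> complex mat list \<Rightarrow> complex mat \<Rightarrow> complex mat" where
  "adj_channel n Es X = msum n (map (\<lambda>E. dag E * X * E) Es)"

definition model_out :: "nat \<Rightarrow> complex mat list \<Rightarrow> complex mat list \<Rightarrow> complex mat \<Rightarrow> nat \<Rightarrow> real" where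
  "model_out n Es Ms \<rho> i = Re (mtrace (Ms ! i * channel n Es \<rho> * dag (Ms ! i)))"

definition tv_dist :: "nat \<Rightarrow> (nat \<Rightarrow> real) \<Rightarrow> (nat \<Rightarrow> real) \<Rightarrow> real" where
  "tv_dist m p q = (\<Sum>i<m. \<bar>p i - q i\<bar>) / 2"

definition lipschitz_bounds :: "nat \<Rightarrow> complex mat list \<Rightarrow> complex mat list \<Rightarrow> real set" where
  "lipschitz_bounds n Es Ms = {K. 0 \<le> K \<and> (\<forall>\<rho> \<sigma>. density n \<rho> \<longrightarrow> density n \<sigma> \<longrightarrow>
      tv_dist (length Ms) (model_out n Es Ms \<rho>) (model_out n Es Ms \<sigma>) \<le> K * trace_dist \<rho> \<sigma>)}"

definition M_set :: "nat \<Rightarrow> complex mat list \<Rightarrow> complex mat list \<Rightarrow> nat set \<Rightarrow> complex mat" where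
  "M_set n Es Ms A = msum n (map (\<lambda>i. adj_channel n Es (dag (Ms ! i) * Ms ! i)) (sorted_list_of_set A))"

(* largest / smallest eigenvalue (of a Hermitian matrix; eigenvalues are real) *)
definition lambda_max :: "complex mat \<Rightarrow> real" where
  "lambda_max M = Max (Re ` {k. eigenvalue M k})"

definition lambda_min :: "complex mat \<Rightarrow> real" where
  "lambda_min M = Min (Re ` {k. eigenvalue M k})"

definition proj :: "complex vec \<Rightarrow> complex mat" where
  "proj v = mat (dim_vec v) (dim_vec v) (\<lambda>(i,j). v $ i * cnj (v $ j))"

end

theory Submission
  imports Defs
begin

lemma dag_dim[simp]: "dim_row (dag A) = dim_col A" "dim_col (dag A) = dim_row A"
  by (simp_all add: dag_def)
lemma dag_carrier[simp]: "A \<in> carrier_mat nr nc \<Longrightarrow> dag A \<in> carrier_mat nc nr"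
  by (metis carrier_matD carrier_matI dag_dim)
lemma index_dag[simp]: "i < dim_col A \<Longrightarrow> j < dim_row A \<Longrightarrow> dag A $$ (i,j) = cnj (A $$ (j,i))"
  by (simp add: dag_def)
lemma dag_dag[simp]: "dag (dag A) = A"
  by (rule eq_matI, simp_all)
lemma index_mult_sum: "i < dim_row A \<Longrightarrow> j < dim_col B \<Longrightarrow> dim_col A = dim_row B \<Longrightarrow>
   (A * B) $$ (i,j) = (\<Sum>l<dim_row B. A $$ (i,l) * B $$ (l,j))"
  by (simp add: scalar_prod_def atLeast0LessThan)

lemma mult_vec_sum: "i < dim_row A \<Longrightarrow> dim_col A = dim_vec v \<Longrightarrow> (A *\<^sub>v v) $ i = (\<Sum>l<dim_vec v. A $$ (i,l) * v $ l)"
  by (simp add: scalar_prod_def mult_mat_vec_def atLeast0LessThan)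

lemma cinner_sum: "(v \<bullet>c w) = (\<Sum>i<dim_vec w. v $ i * cnj (w $ i))"
  by (simp add: scalar_prod_def atLeast0LessThan)

lemma dag_mult: assumes "A \<in> carrier_mat nr k" "B \<in> carrier_mat k nc"
  shows "dag (A * B) = dag B * dag A"
  using assms by (intro eq_matI, auto simp: index_mult_sum cnj_sum mult.commute simp del: index_mult_mat(1))

lemma dag_add: assumes "A \<in> carrier_mat nr nc" "B \<in> carrier_mat nr nc"
  shows "dag (A + B) = dag A + dag B"
  using assms by (intro eq_matI, auto)

lemma dag_minus: assumes "A \<in> carrier_mat nr nc" "B \<in> carrier_mat nr nc"
  shows "dag (A - B) = dag A - dag B"
  using assms by (intro eq_matI, auto)

lemma dag_one[simp]: "dag (1\<^sub>m n) = 1\<^sub>m n"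
  by (intro eq_matI, auto)

lemma dag_zero[simp]: "dag (0\<^sub>m nr nc) = 0\<^sub>m nc nr"
  by (intro eq_matI, auto)

lemma dag_smult: "dag (k \<cdot>\<^sub>m A) = cnj k \<cdot>\<^sub>m dag A"
  by (intro eq_matI, auto)

lemma cinner_mult_dag: assumes A: "A \<in> carrier_mat nr nc" and v: "v \<in> carrier_vec nc" and w: "w \<in> carrier_vec nr"
  shows "(A *\<^sub>v v) \<bullet>c w = v \<bullet>c (dag A *\<^sub>v w)"
proof -
  have "(A *\<^sub>v v) \<bullet>c w = (\<Sum>i<nr. (\<Sum>l<nc. A $$ (i,l) * v $ l) * cnj (w $ i))"
    using A v w by (simp add: cinner_sum mult_vec_sum del: index_mult_mat_vec)
  also have "\<dots> = (\<Sum>l<nc. v $ l * (\<Sum>i<nr. A $$ (i,l) * cnj (w $ i)))"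
    by (simp add: sum_distrib_left sum_distrib_right ac_simps, rule sum.swap)
  also have "\<dots> = v \<bullet>c (dag A *\<^sub>v w)"
    using A v w by (simp add: cinner_sum mult_vec_sum cnj_sum del: index_mult_mat_vec)
  finally show ?thesis .
qed

lemma cinner_cnj: assumes "dim_vec v = dim_vec w" shows "v \<bullet>c w = cnj (w \<bullet>c v)"
  using assms by (simp add: cinner_sum cnj_sum mult.commute)

lemma msum_Nil[simp]: "msum n [] = 0\<^sub>m n n" by (simp add: msum_def)
lemma msum_Cons[simp]: "msum n (x # xs) = x + msum n xs" by (simp add: msum_def)

lemma msum_carrier[simp]: "(\<And>x. x \<in> set xs \<Longrightarrow> x \<in> carrier_mat n n) \<Longrightarrow> msum n xs \<in> carrier_mat n n"
  by (induct xs, auto)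

lemma msum_index: "(\<And>x. x \<in> set xs \<Longrightarrow> x \<in> carrier_mat n n) \<Longrightarrow> i < n \<Longrightarrow> j < n \<Longrightarrow>
   msum n xs $$ (i,j) = (\<Sum>x\<leftarrow>xs. x $$ (i,j))"
proof (induct xs)
  case (Cons a xs)
  have "msum n xs \<in> carrier_mat n n" "a \<in> carrier_mat n n" using Cons.prems by auto
  then have "dim_row (msum n xs) = n" "dim_col (msum n xs) = n" "dim_row a = n" "dim_col a = n" by auto
  then show ?case using Cons by (simp)
qed simp

lemma msum_map_carrier[simp]: "(\<And>x. x \<in> set xs \<Longrightarrow> f x \<in> carrier_mat n n) \<Longrightarrow> msum n (map f xs) \<in> carrier_mat n n"
  by (rule msum_carrier, auto)

lemma msum_map_index: "(\<And>x. x \<in> set xs \<Longrightarrow> f x \<in> carrier_mat n n) \<Longrightarrow> i < n \<Longrightarrow> j < n \<Longrightarrow>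
   msum n (map f xs) $$ (i,j) = (\<Sum>x\<leftarrow>xs. f x $$ (i,j))"
  by (subst msum_index, auto simp: comp_def)

lemma mtrace_msum_map: "(\<And>x. x \<in> set xs \<Longrightarrow> f x \<in> carrier_mat n n) \<Longrightarrow>
   mtrace (msum n (map f xs)) = (\<Sum>x\<leftarrow>xs. mtrace (f x))"
proof (induct xs)
  case Nil then show ?case by (simp add: mtrace_def)
next
  case (Cons a xs)
  have c: "f a \<in> carrier_mat n n" "msum n (map f xs) \<in> carrier_mat n n" using Cons.prems by auto
  have "mtrace (msum n (map f (a # xs))) = mtrace (f a) + mtrace (msum n (map f xs))"
    using c by (simp add: mtrace_def sum.distrib)
  then show ?case using Cons by simp
qed

lemma mtrace_comm: assumes "A \<in> carrier_mat n m" "B \<in> carrier_mat m n"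
  shows "mtrace (A * B) = mtrace (B * A)"
proof -
  have "mtrace (A * B) = (\<Sum>i<n. \<Sum>l<m. A $$ (i,l) * B $$ (l,i))"
    using assms by (simp add: mtrace_def index_mult_sum del: index_mult_mat(1))
  also have "\<dots> = (\<Sum>l<m. \<Sum>i<n. B $$ (l,i) * A $$ (i,l))"
    by (subst sum.swap) (simp add: mult.commute)
  also have "\<dots> = mtrace (B * A)"
    using assms by (simp add: mtrace_def index_mult_sum del: index_mult_mat(1))
  finally show ?thesis .
qed

lemma mtrace_add: "A \<in> carrier_mat n n \<Longrightarrow> B \<in> carrier_mat n n \<Longrightarrow> mtrace (A + B) = mtrace A + mtrace B"
  by (simp add: mtrace_def sum.distrib)
lemma mtrace_minus: "A \<in> carrier_mat n n \<Longrightarrow> B \<in> carrier_mat n n \<Longrightarrow> mtrace (A - B) = mtrace A - mtrace B"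
  by (simp add: mtrace_def sum_subtractf)
lemma mtrace_smult: "A \<in> carrier_mat n n \<Longrightarrow> mtrace (k \<cdot>\<^sub>m A) = k * mtrace A"
  by (simp add: mtrace_def sum_distrib_left)
lemma mtrace_one[simp]: "mtrace (1\<^sub>m n) = of_nat n"
  by (simp add: mtrace_def)
lemma mtrace_zero[simp]: "mtrace (0\<^sub>m n n) = 0"
  by (simp add: mtrace_def)

declare minus_carrier_mat[simp]

definition orthonormal :: "complex vec list \<Rightarrow> bool" where
  "orthonormal us \<longleftrightarrow> (\<forall>i<length us. \<forall>j<length us. us!i \<bullet>c us!j = (if i = j then 1 else 0))"

lemma cinner_self_pos: "v \<in> carrier_vec n \<Longrightarrow> v \<noteq> 0\<^sub>v n \<Longrightarrow> Re (v \<bullet>c v) > 0 \<and> Im (v \<bullet>c v) = 0"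
  using conjugate_square_greater_0_vec[of v n] by (simp add: less_complex_def)

lemma cinner_self_ge0: "Re (v \<bullet>c v) \<ge> 0 \<and> Im (v \<bullet>c v) = 0"
  using conjugate_square_ge_0_vec[of v] by (simp add: less_eq_complex_def)

lemma cinner_smult_left: "dim_vec (v::complex vec) = dim_vec w \<Longrightarrow> (a \<cdot>\<^sub>v v) \<bullet>c w = a * (v \<bullet>c w)"
  by (simp add: cinner_sum sum_distrib_left ac_simps)

lemma cinner_smult_right: "dim_vec (v::complex vec) = dim_vec w \<Longrightarrow> v \<bullet>c (a \<cdot>\<^sub>v w) = cnj a * (v \<bullet>c w)"
  by (simp add: cinner_sum sum_distrib_left ac_simps)

lemma normalize_vec: fixes v :: "complex vec" assumes v: "v \<in> carrier_vec n" "v \<noteq> 0\<^sub>v n"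
  shows "\<exists>a. a \<noteq> 0 \<and> (a \<cdot>\<^sub>v v) \<bullet>c (a \<cdot>\<^sub>v v) = 1"
proof -
  let ?c = "v \<bullet>c v"
  have c: "Re ?c > 0" "Im ?c = 0" using cinner_self_pos[OF v] by auto
  have c': "?c = complex_of_real (Re ?c)" using c by (simp add: complex_eq_iff)
  define a where "a = complex_of_real (1 / sqrt (Re ?c))"
  have "(a \<cdot>\<^sub>v v) \<bullet>c (a \<cdot>\<^sub>v v) = a * cnj a * ?c"
    by (simp add: cinner_smult_left cinner_smult_right)
  also have "\<dots> = 1" unfolding a_def using c
    by (subst c') (simp add: field_simps flip: of_real_mult)
  finally have "(a \<cdot>\<^sub>v v) \<bullet>c (a \<cdot>\<^sub>v v) = 1" .
  moreover have "a \<noteq> 0" using c by (simp add: a_def)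
  ultimately show ?thesis by blast
qed

lemma mat_of_cols_dag_mult: assumes "set us \<subseteq> carrier_vec n"
  shows "dag (mat_of_cols n us) * mat_of_cols n us = mat (length us) (length us) (\<lambda>(i,j). us!j \<bullet>c us!i)"
proof (rule eq_matI)
  fix i j assume ij: "i < dim_row (mat (length us) (length us) (\<lambda>(i,j). us!j \<bullet>c us!i))"
     "j < dim_col (mat (length us) (length us) (\<lambda>(i,j). us!j \<bullet>c us!i))"
  then have "i < length us" "j < length us" by auto
  then have d: "dim_vec (us!i) = n" "dim_vec (us!j) = n" using assms by (metis carrier_vecD nth_mem subsetD)+
  show "(dag (mat_of_cols n us) * mat_of_cols n us) $$ (i, j) = mat (length us) (length us) (\<lambda>(i,j). us!j \<bullet>c us!i) $$ (i, j)"
    using ij d by (simp add: index_mult_sum cinner_sum mat_of_cols_def mult.commute del: index_mult_mat(1))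
qed auto

lemma orthonormal_unitary: assumes "set us \<subseteq> carrier_vec n" "orthonormal us"
  shows "dag (mat_of_cols n us) * mat_of_cols n us = 1\<^sub>m (length us)"
  unfolding mat_of_cols_dag_mult[OF assms(1)]
  using assms(2) unfolding orthonormal_def by (intro eq_matI, auto)

lemma ortho_ext1:
  assumes us: "set us \<subseteq> carrier_vec n" and on: "orthonormal us" and kn: "length us < n"
  shows "\<exists>w \<in> carrier_vec n. w \<bullet>c w = 1 \<and> (\<forall>u\<in>set us. w \<bullet>c u = 0)"
proof -
  define U where "U = mat_of_cols n us"
  define k where "k = length us"
  have U: "U \<in> carrier_mat n k" by (simp add: U_def k_def)
  have dU: "dag U \<in> carrier_mat k n" using U by simp
  have UU: "dag U * U = 1\<^sub>m k" using orthonormal_unitary[OF us on] by (simp add: U_def k_def)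
  define P where "P = 1\<^sub>m n - U * dag U"
  have UdU: "U * dag U \<in> carrier_mat n n" using U by (metis dag_carrier mult_carrier_mat)
  have P: "P \<in> carrier_mat n n" using UdU by (simp add: P_def)
  have UP: "dag U * P = 0\<^sub>m k n"
  proof -
    have "dag U * P = dag U * 1\<^sub>m n - dag U * (U * dag U)" using U unfolding P_def
      by (subst mult_minus_distrib_mat[of _ k n], auto)
    also have "dag U * (U * dag U) = (dag U * U) * dag U" using assoc_mult_mat[OF dU U dU] by simp
    also have "\<dots> = dag U" using UU left_mult_one_mat[OF dU] by simp
    finally show ?thesis using dU right_mult_one_mat[OF dU] minus_r_inv_mat[OF dU] by simp
  qed
  have "mtrace P = of_nat n - mtrace (U * dag U)" unfolding P_def using U by (simp add: mtrace_minus[of _ n])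
  also have "mtrace (U * dag U) = mtrace (dag U * U)" using U dU by (rule mtrace_comm)
  also have "\<dots> = of_nat k" using UU by simp
  finally have trP: "mtrace P = of_nat n - of_nat k" .
  have "P \<noteq> 0\<^sub>m n n" using trP kn unfolding k_def by auto
  have "\<exists>i j. i < n \<and> j < n \<and> P $$ (i,j) \<noteq> 0"
  proof (rule ccontr)
    assume "\<not> ?thesis"
    then have "P = 0\<^sub>m n n" using P by (intro eq_matI) auto
    then show False using \<open>P \<noteq> 0\<^sub>m n n\<close> by simp
  qed
  then obtain i j where ij: "i < n" "j < n" "P $$ (i,j) \<noteq> 0" by blast
  define v where "v = col P j"
  have v: "v \<in> carrier_vec n" using P ij by (simp add: v_def)
  have v0: "v \<noteq> 0\<^sub>v n"
  proof
    assume "v = 0\<^sub>v n"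
    then have "v $ i = 0" using ij by simp
    then show False using ij P by (simp add: v_def)
  qed
  have orth: "v \<bullet>c u = 0" if "u \<in> set us" for u
  proof -
    from that obtain l where l: "l < k" "u = us ! l" unfolding k_def by (auto simp: in_set_conv_nth)
    have un: "dim_vec u = n" using l us that by auto
    have "(dag U * P) $$ (l,j) = 0" using UP l ij by simp
    moreover have "(dag U * P) $$ (l,j) = (\<Sum>p<n. dag U $$ (l,p) * P $$ (p,j))"
      using l ij U P by (subst index_mult_sum) auto
    moreover have "dag U $$ (l,p) = cnj (u $ p)" if "p < n" for p
      using l U that by (simp add: U_def k_def mat_of_cols_def)
    ultimately have "(\<Sum>p<n. cnj (u $ p) * P $$ (p,j)) = 0" by simp
    then show ?thesis using un P ij by (simp add: v_def cinner_sum mult.commute)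
  qed
  obtain a where a: "a \<noteq> 0" "(a \<cdot>\<^sub>v v) \<bullet>c (a \<cdot>\<^sub>v v) = 1" using normalize_vec[OF v v0] by auto
  show ?thesis
  proof (intro bexI[of _ "a \<cdot>\<^sub>v v"] conjI ballI)
    fix u assume "u \<in> set us"
    then show "(a \<cdot>\<^sub>v v) \<bullet>c u = 0" using orth us v by (auto simp: cinner_smult_left)
  qed (use a v in auto)
qed

lemma orthonormal_snoc: assumes us: "set us \<subseteq> carrier_vec n" and w: "w \<in> carrier_vec n"
  and on: "orthonormal us" and ww: "w \<bullet>c w = 1" and wu: "\<forall>u\<in>set us. w \<bullet>c u = 0"
  shows "orthonormal (us @ [w])"
  unfolding orthonormal_def
proof (intro allI impI)
  fix i j assume i: "i < length (us @ [w])" and j: "j < length (us @ [w])"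
  have uw: "u \<bullet>c w = 0" if "u \<in> set us" for u
    using wu that us w cinner_cnj[of u w] by auto
  show "(us @ [w]) ! i \<bullet>c (us @ [w]) ! j = (if i = j then 1 else 0)"
    using i j on ww wu uw unfolding orthonormal_def
    by (cases "i < length us"; cases "j < length us"; auto simp: nth_append)
qed

lemma ortho_ext:
  "set us \<subseteq> carrier_vec n \<Longrightarrow> orthonormal us \<Longrightarrow> length us \<le> n \<Longrightarrow>
   \<exists>ws. set ws \<subseteq> carrier_vec n \<and> orthonormal (us @ ws) \<and> length (us @ ws) = n"
proof (induct "n - length us" arbitrary: us)
  case 0
  then show ?case by (intro exI[of _ "[]"]) auto
next
  case (Suc d)
  have "length us < n" using Suc.hyps(2) by arith
  then obtain w where w: "w \<in> carrier_vec n" "w \<bullet>c w = 1" "\<forall>u\<in>set us. w \<bullet>c u = 0"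
    using ortho_ext1[of us n] Suc.prems by auto
  have on: "orthonormal (us @ [w])" using orthonormal_snoc[of us n w] Suc.prems w by auto
  have "\<exists>ws. set ws \<subseteq> carrier_vec n \<and> orthonormal ((us @ [w]) @ ws) \<and> length ((us @ [w]) @ ws) = n"
    by (rule Suc.hyps(1)) (use Suc.hyps(2) Suc.prems w on in auto)
  then obtain ws where "set ws \<subseteq> carrier_vec n" "orthonormal (us @ [w] @ ws)" "length (us @ [w] @ ws) = n"
    by auto
  then show ?case using w by (intro exI[of _ "w # ws"]) auto
qed

lemma sum_split_shift: fixes f :: "nat \<Rightarrow> 'a::comm_monoid_add"
  assumes "k \<le> n" "\<And>j. j < k \<Longrightarrow> f j = 0"
  shows "(\<Sum>j<n. f j) = (\<Sum>b<n-k. f (k+b))"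
proof -
  have "(\<Sum>j<n. f j) = (\<Sum>j\<in>{0..<n}. f j)" by (simp add: atLeast0LessThan)
  also have "\<dots> = (\<Sum>j\<in>{0..<k}. f j) + (\<Sum>j\<in>{k..<n}. f j)"
    using sum.atLeastLessThan_concat[of 0 k n f] assms(1) by (simp)
  also have "(\<Sum>j\<in>{0..<k}. f j) = 0" using assms(2) by (simp)
  also have "(\<Sum>j\<in>{k..<n}. f j) = (\<Sum>b\<in>{0..<n-k}. f (k+b))"
    using sum.atLeastLessThan_shift_0[of f k n] by (simp add: comp_def)
  finally show ?thesis by (simp add: atLeast0LessThan)
qed

lemma dag_mult_entry: assumes U: "U \<in> carrier_mat n m" and M: "M \<in> carrier_mat n m'"
  and j: "j < m" and l: "l < m'"
  shows "(dag U * M) $$ (j,l) = col M l \<bullet>c col U j"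
  using U M j l by (simp add: index_mult_sum cinner_sum mult.commute del: index_mult_mat(1))

lemma dag_A_U_entry: assumes U: "U \<in> carrier_mat n m" and A: "A \<in> carrier_mat n n"
  and j: "j < m" and l: "l < m"
  shows "(dag U * A * U) $$ (j,l) = (A *\<^sub>v col U l) \<bullet>c col U j"
proof -
  have "dag U * A * U = dag U * (A * U)" using U A by (simp add: assoc_mult_mat[of _ m n _ n _ m])
  moreover have "(dag U * (A * U)) $$ (j,l) = col (A * U) l \<bullet>c col U j"
    using dag_mult_entry[OF U mult_carrier_mat[OF A U] j l] .
  moreover have "col (A * U) l = A *\<^sub>v col U l" using col_mult2[OF A U l] .
  ultimately show ?thesis by (simp only:)
qed

lemma unit_vec_conj[simp]: "conjugate (unit_vec n l :: complex vec) = unit_vec n l"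
  by (intro eq_vecI, auto simp: unit_vec_def)

lemma exists_eigenvector: fixes C :: "complex mat"
  assumes C: "C \<in> carrier_mat m m" and m: "0 < m"
  shows "\<exists>c \<mu>. c \<in> carrier_vec m \<and> c \<noteq> 0\<^sub>v m \<and> C *\<^sub>v c = \<mu> \<cdot>\<^sub>v c"
proof -
  obtain as where as: "char_poly C = (\<Prod>a\<leftarrow>as. [:- a, 1:])" "length as = m"
    using char_poly_factorized[OF C] by (blast)
  then obtain a as' where "as = a # as'" using m by (cases as) (auto)
  then have "poly (char_poly C) a = 0" using as by (simp)
  then have "eigenvalue C a" using eigenvalue_root_char_poly[OF C] by (simp)
  then show ?thesis using C unfolding eigenvalue_def eigenvector_def by (auto)
qed

lemma eig_step:
  fixes A :: "complex mat"
  assumes A: "A \<in> carrier_mat n n" and hA: "dag A = A"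
    and us: "set us \<subseteq> carrier_vec n" and on: "orthonormal us" and kn: "length us < n"
    and ev: "\<forall>u\<in>set us. \<exists>lam. A *\<^sub>v u = lam \<cdot>\<^sub>v u"
  shows "\<exists>w \<in> carrier_vec n. w \<bullet>c w = 1 \<and> (\<forall>u\<in>set us. w \<bullet>c u = 0) \<and> (\<exists>lam. A *\<^sub>v w = lam \<cdot>\<^sub>v w)"
proof -
  obtain ws where ws: "set ws \<subseteq> carrier_vec n" "orthonormal (us @ ws)" "length (us @ ws) = n"
    using ortho_ext[OF us on] kn by (auto)
  define zs where "zs = us @ ws"
  define k where "k = length us"
  define m where "m = n - k"
  have m: "0 < m" using kn by (simp add: m_def k_def)
  have zs: "set zs \<subseteq> carrier_vec n" "orthonormal zs" "length zs = n"
    using ws us by (auto simp: zs_def)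
  have zsk: "zs ! l = us ! l" if "l < k" for l using that by (simp add: zs_def k_def nth_append)
  have zsn: "zs ! l \<in> carrier_vec n" if "l < n" for l using zs that by (metis nth_mem subsetD)
  define U where "U = mat_of_cols n zs"
  have U: "U \<in> carrier_mat n n" using mat_of_cols_carrier(1)[of n zs] zs(3) by (simp add: U_def)
  have dU: "dag U \<in> carrier_mat n n" using U by (simp)
  have UU: "dag U * U = 1\<^sub>m n" using orthonormal_unitary[OF zs(1,2)] zs(3) by (simp add: U_def)
  have UU': "U * dag U = 1\<^sub>m n" using mat_mult_left_right_inverse[OF dU U UU] .
  have colU: "col U l = zs ! l" if "l < n" for l using that zs zsn[OF that] by (simp add: U_def)
  define B where "B = dag U * A * U"
  have B: "B \<in> carrier_mat n n" using U A unfolding B_def by (metis dag_carrier mult_carrier_mat)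
  have Bent: "B $$ (j,l) = (A *\<^sub>v zs!l) \<bullet>c zs!j" if "j < n" "l < n" for j l
    using dag_A_U_entry[OF U A that] colU that by (simp add: B_def)
  have Bzero: "B $$ (i,j) = 0" if ij: "i < k" "j < n" "j \<noteq> i" for i j
  proof -
    have ik: "i < n" using ij kn k_def by (simp)
    have "zs ! i \<in> set us" using ij zsk by (simp add: k_def)
    then obtain lam where lam: "A *\<^sub>v zs!i = lam \<cdot>\<^sub>v zs!i" using ev by (blast)
    have "B $$ (i,j) = (A *\<^sub>v zs!j) \<bullet>c zs!i" using Bent ik ij by (simp)
    also have "\<dots> = zs!j \<bullet>c (dag A *\<^sub>v zs!i)" using cinner_mult_dag[OF A zsn zsn] ij ik by (simp)
    also have "\<dots> = zs!j \<bullet>c (lam \<cdot>\<^sub>v zs!i)" using hA lam by (simp)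
    also have "\<dots> = cnj lam * (zs!j \<bullet>c zs!i)" using zsn[OF ij(2)] zsn[OF ik] by (intro cinner_smult_right) (simp)
    also have "zs!j \<bullet>c zs!i = 0" using zs(2,3) ij ik unfolding orthonormal_def by (auto)
    finally show ?thesis by (simp)
  qed
  define C where "C = mat m m (\<lambda>(a,b). B $$ (k+a, k+b))"
  have C: "C \<in> carrier_mat m m" by (simp add: C_def)
  obtain c \<mu> where c: "c \<in> carrier_vec m" "c \<noteq> 0\<^sub>v m" "C *\<^sub>v c = \<mu> \<cdot>\<^sub>v c"
    using exists_eigenvector[OF C m] by (blast)
  define y where "y = vec n (\<lambda>i. if i < k then 0 else c $ (i - k))"
  have y: "y \<in> carrier_vec n" by (simp add: y_def)
  have nkm: "n = k + m" using kn by (simp add: m_def k_def)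
  have By: "B *\<^sub>v y = \<mu> \<cdot>\<^sub>v y"
  proof (rule eq_vecI)
    fix i assume "i < dim_vec (\<mu> \<cdot>\<^sub>v y)"
    then have i: "i < n" by (simp add: y_def)
    have "(B *\<^sub>v y) $ i = (\<Sum>j<n. B $$ (i,j) * y $ j)" using B i y by (simp add: mult_vec_sum del: index_mult_mat_vec)
    also have "\<dots> = (\<Sum>b<m. B $$ (i,k+b) * c $ b)"
      by (subst sum_split_shift[of k]) (auto simp: y_def nkm)
    also have "\<dots> = \<mu> * y $ i"
    proof (cases "i < k")
      case True
      then have "B $$ (i,k+b) = 0" if "b < m" for b using Bzero[of i "k+b"] that nkm by (simp)
      then show ?thesis using True i by (simp add: y_def)
    next
      case False
      then obtain a where a: "i = k + a" "a < m" using i nkm by (metis add_diff_inverse_nat nat_add_left_cancel_less)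
      have "(C *\<^sub>v c) $ a = (\<Sum>b<m. C $$ (a,b) * c $ b)" using C c(1) a by (simp add: mult_vec_sum del: index_mult_mat_vec)
      also have "\<dots> = (\<Sum>b<m. B $$ (i,k+b) * c $ b)" using a by (simp add: C_def)
      finally show ?thesis using c a i by (simp add: y_def)
    qed
    finally show "(B *\<^sub>v y) $ i = (\<mu> \<cdot>\<^sub>v y) $ i" using i by (simp add: y_def)
  qed (use B in \<open>simp add: y_def\<close>)
  define v where "v = U *\<^sub>v y"
  have v: "v \<in> carrier_vec n" using U y by (simp add: v_def)
  have UB: "U * B = A * U"
  proof -
    have dA: "dag U * A \<in> carrier_mat n n" using dU A by (simp)
    have "U * B = U * ((dag U * A) * U)" by (simp add: B_def)
    also have "\<dots> = (U * (dag U * A)) * U" using assoc_mult_mat[OF U dA U] by (simp)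
    also have "U * (dag U * A) = (U * dag U) * A" using assoc_mult_mat[OF U dU A] by (simp)
    also have "\<dots> = A" using UU' A by (simp)
    finally show ?thesis .
  qed
  have Av: "A *\<^sub>v v = \<mu> \<cdot>\<^sub>v v"
  proof -
    have "A *\<^sub>v v = (A * U) *\<^sub>v y" using A U y by (simp add: v_def)
    also have "\<dots> = (U * B) *\<^sub>v y" using UB by (simp)
    also have "\<dots> = U *\<^sub>v (\<mu> \<cdot>\<^sub>v y)" using U B y By by (simp)
    also have "\<dots> = \<mu> \<cdot>\<^sub>v v" using U y by (simp add: v_def mult_mat_vec)
    finally show ?thesis .
  qed
  have Uv: "dag U *\<^sub>v v = y" unfolding v_def using assoc_mult_mat_vec[OF dU U y, symmetric] UU y by (simp)
  have y0: "y \<noteq> 0\<^sub>v n"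
  proof
    assume y0: "y = 0\<^sub>v n"
    obtain a where a: "a < m" "c $ a \<noteq> 0" using c by (metis carrier_vecD eq_vecI index_zero_vec)
    have "y $ (k + a) = c $ a" using a nkm by (simp add: y_def)
    then show False using y0 a nkm by (simp)
  qed
  have v0: "v \<noteq> 0\<^sub>v n"
  proof
    assume "v = 0\<^sub>v n"
    then have "y = dag U *\<^sub>v 0\<^sub>v n" using Uv by (simp)
    also have "\<dots> = 0\<^sub>v n" using dU by (intro eq_vecI) (auto simp: scalar_prod_def)
    finally show False using y0 by (simp)
  qed
  have orth: "v \<bullet>c u = 0" if uin: "u \<in> set us" for u
  proof -
    obtain l where l0: "l < length us" "us ! l = u" using uin by (auto simp: in_set_conv_nth)
    then have l: "l < k" "u = us ! l" by (auto simp: k_def)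
    have ln: "l < n" using l kn k_def by (simp)
    have "v \<bullet>c u = v \<bullet>c zs ! l" using l zsk by (simp)
    also have "\<dots> = y \<bullet>c (dag U *\<^sub>v zs ! l)" using cinner_mult_dag[OF U y zsn[OF ln]] by (simp add: v_def)
    also have "dag U *\<^sub>v zs ! l = unit_vec n l"
    proof -
      have "dag U *\<^sub>v zs ! l = col (dag U * U) l" using col_mult2[OF dU U ln] colU[OF ln] by simp
      then show ?thesis using UU ln by (simp)
    qed
    also have "y \<bullet>c unit_vec n l = y $ l" using ln by (simp)
    also have "\<dots> = 0" using l ln by (simp add: y_def)
    finally show ?thesis .
  qed
  obtain a where a: "a \<noteq> 0" "(a \<cdot>\<^sub>v v) \<bullet>c (a \<cdot>\<^sub>v v) = 1" using normalize_vec[OF v v0] by (auto)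
  show ?thesis
  proof (intro bexI[of _ "a \<cdot>\<^sub>v v"] conjI ballI exI)
    fix u assume "u \<in> set us"
    then show "(a \<cdot>\<^sub>v v) \<bullet>c u = 0" using orth us v by (auto simp: cinner_smult_left)
  next
    show "A *\<^sub>v (a \<cdot>\<^sub>v v) = \<mu> \<cdot>\<^sub>v (a \<cdot>\<^sub>v v)"
      using A v Av by (simp add: mult_mat_vec smult_smult_assoc mult.commute)
  qed (use a v in \<open>auto\<close>)
qed

lemma spectral_list:
  fixes A :: "complex mat"
  assumes A: "A \<in> carrier_mat n n" and hA: "dag A = A"
  shows "\<exists>us. set us \<subseteq> carrier_vec n \<and> orthonormal us \<and> length us = n \<and> (\<forall>u\<in>set us. \<exists>lam. A *\<^sub>v u = lam \<cdot>\<^sub>v u)"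
proof -
  have "k \<le> n \<Longrightarrow> \<exists>us. set us \<subseteq> carrier_vec n \<and> orthonormal us \<and> length us = k \<and> (\<forall>u\<in>set us. \<exists>lam. A *\<^sub>v u = lam \<cdot>\<^sub>v u)" for k
  proof (induct k)
    case 0 show ?case by (intro exI[of _ "[]"]) (simp add: orthonormal_def)
  next
    case (Suc k)
    then obtain us where us: "set us \<subseteq> carrier_vec n" "orthonormal us" "length us = k" "\<forall>u\<in>set us. \<exists>lam. A *\<^sub>v u = lam \<cdot>\<^sub>v u"
      by (auto)
    obtain w where w: "w \<in> carrier_vec n" "w \<bullet>c w = 1" "\<forall>u\<in>set us. w \<bullet>c u = 0" "\<exists>lam. A *\<^sub>v w = lam \<cdot>\<^sub>v w"
      using eig_step[OF A hA us(1,2) _ us(4)] us(3) Suc.prems by (auto)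
    show ?case using orthonormal_snoc[OF us(1) w(1) us(2) w(2,3)] us w by (intro exI[of _ "us @ [w]"]) auto
  qed
  then show ?thesis by (auto)
qed

definition dmat :: "nat \<Rightarrow> (nat \<Rightarrow> real) \<Rightarrow> complex mat" where
  "dmat n d = mat n n (\<lambda>(i,j). if i = j then complex_of_real (d i) else 0)"

lemma dmat_dim[simp]: "dim_row (dmat n d) = n" "dim_col (dmat n d) = n"
  by (simp_all add: dmat_def)

lemma dmat_carrier[simp]: "dmat n d \<in> carrier_mat n n"
  by (simp add: dmat_def)

lemma dmat_index[simp]: "i < n \<Longrightarrow> j < n \<Longrightarrow> dmat n d $$ (i,j) = (if i = j then complex_of_real (d i) else 0)"
  by (simp add: dmat_def)

lemma dag_dmat[simp]: "dag (dmat n d) = dmat n d"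
  by (intro eq_matI) (auto simp: dmat_def)

lemma mult_dmat: assumes U: "U \<in> carrier_mat m n"
  shows "U * dmat n d = mat m n (\<lambda>(i,j). U $$ (i,j) * complex_of_real (d j))"
proof (rule eq_matI)
  fix i j assume ij: "i < dim_row (mat m n (\<lambda>(i,j). U $$ (i,j) * complex_of_real (d j)))"
    "j < dim_col (mat m n (\<lambda>(i,j). U $$ (i,j) * complex_of_real (d j)))"
  then have i: "i < m" and j: "j < n" by (auto)
  have "(U * dmat n d) $$ (i,j) = (\<Sum>p<n. U $$ (i,p) * dmat n d $$ (p,j))"
    using U i j by (subst index_mult_sum) (auto)
  also have "\<dots> = (\<Sum>p<n. if p = j then U $$ (i,j) * complex_of_real (d j) else 0)"
    using j by (intro sum.cong) (auto)
  also have "\<dots> = U $$ (i,j) * complex_of_real (d j)" using j by (simp)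
  finally show "(U * dmat n d) $$ (i,j) = mat m n (\<lambda>(i,j). U $$ (i,j) * complex_of_real (d j)) $$ (i,j)"
    using i j by (simp)
qed (use U in auto)

lemma cnj_real: "x = cnj x \<Longrightarrow> x = complex_of_real (Re x)"
  by (simp add: complex_eq_iff)

lemma spectral:
  fixes A :: "complex mat"
  assumes A: "A \<in> carrier_mat n n" and hA: "dag A = A"
  shows "\<exists>U d. U \<in> carrier_mat n n \<and> dag U * U = 1\<^sub>m n \<and> U * dag U = 1\<^sub>m n \<and>
     A = U * dmat n d * dag U \<and> (\<forall>l<n. A *\<^sub>v col U l = complex_of_real (d l) \<cdot>\<^sub>v col U l)"
proof -
  obtain us where us: "set us \<subseteq> carrier_vec n" "orthonormal us" "length us = n"
    "\<forall>u\<in>set us. \<exists>lam. A *\<^sub>v u = lam \<cdot>\<^sub>v u"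
    using spectral_list[OF A hA] by (blast)
  have usn: "us ! l \<in> carrier_vec n" if "l < n" for l using us(1,3) that by (metis nth_mem subsetD)
  have "\<forall>l\<in>{..<n}. \<exists>lam. A *\<^sub>v us!l = lam \<cdot>\<^sub>v us!l" using us(3,4) by (simp)
  then obtain lam where lam: "\<forall>l\<in>{..<n}. A *\<^sub>v us!l = lam l \<cdot>\<^sub>v us!l" by (metis bchoice)
  have real: "lam l = complex_of_real (Re (lam l))" if l: "l < n" for l
  proof -
    let ?z = "us ! l"
    have zz: "?z \<bullet>c ?z = 1" using us(2,3) l unfolding orthonormal_def by (auto)
    have "(A *\<^sub>v ?z) \<bullet>c ?z = lam l" using lam l zz usn[OF l] by (simp add: cinner_smult_left)
    moreover have "(A *\<^sub>v ?z) \<bullet>c ?z = ?z \<bullet>c (A *\<^sub>v ?z)" using cinner_mult_dag[OF A usn[OF l] usn[OF l]] hA by (simp)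
    moreover have "?z \<bullet>c (A *\<^sub>v ?z) = cnj (lam l)" using lam l zz usn[OF l] by (simp add: cinner_smult_right)
    ultimately show ?thesis by (intro cnj_real) (simp)
  qed
  define d where "d l = Re (lam l)" for l
  define U where "U = mat_of_cols n us"
  have U: "U \<in> carrier_mat n n" using mat_of_cols_carrier(1)[of n us] us(3) by (simp add: U_def)
  have dU: "dag U \<in> carrier_mat n n" using U by (simp)
  have UU: "dag U * U = 1\<^sub>m n" using orthonormal_unitary[OF us(1,2)] us(3) by (simp add: U_def)
  have UU': "U * dag U = 1\<^sub>m n" using mat_mult_left_right_inverse[OF dU U UU] .
  have colU: "col U l = us ! l" if "l < n" for l using that us usn[OF that] by (simp add: U_def)
  have eig: "A *\<^sub>v col U l = complex_of_real (d l) \<cdot>\<^sub>v col U l" if "l < n" for l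
    using lam colU[OF that] real[OF that] that by (simp add: d_def)
  have AU: "A * U = U * dmat n d"
  proof (rule eq_matI)
    fix i j assume ij: "i < dim_row (U * dmat n d)" "j < dim_col (U * dmat n d)"
    then have i: "i < n" and j: "j < n" using U by (auto)
    have "(A * U) $$ (i,j) = (A *\<^sub>v col U j) $ i" using A U i j by (simp)
    also have "\<dots> = U $$ (i,j) * complex_of_real (d j)" using eig[OF j] U i j by (simp)
    also have "\<dots> = (U * dmat n d) $$ (i,j)" using mult_dmat[OF U] i j by (simp)
    finally show "(A * U) $$ (i,j) = (U * dmat n d) $$ (i,j)" .
  qed (use A U in auto)
  have "A = A * (U * dag U)" using UU' A by (simp)
  also have "\<dots> = (A * U) * dag U" using assoc_mult_mat[OF A U dU] by (simp)
  also have "\<dots> = U * dmat n d * dag U" using AU by (simp)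
  finally have "A = U * dmat n d * dag U" .
  then show ?thesis using U UU UU' eig by (blast)
qed

lemma eigenvalue_real: fixes A :: "complex mat"
  assumes A: "A \<in> carrier_mat n n" and hA: "dag A = A" and ev: "eigenvalue A k"
  shows "k = complex_of_real (Re k)"
proof -
  obtain v where v: "v \<in> carrier_vec n" "v \<noteq> 0\<^sub>v n" "A *\<^sub>v v = k \<cdot>\<^sub>v v"
    using ev A unfolding eigenvalue_def eigenvector_def by (auto)
  have p: "v \<bullet>c v \<noteq> 0" using cinner_self_pos[OF v(1,2)] by (auto)
  have "(A *\<^sub>v v) \<bullet>c v = k * (v \<bullet>c v)" using v by (simp add: cinner_smult_left)
  moreover have "(A *\<^sub>v v) \<bullet>c v = v \<bullet>c (A *\<^sub>v v)" using cinner_mult_dag[OF A v(1) v(1)] hA by (simp)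
  moreover have "v \<bullet>c (A *\<^sub>v v) = cnj k * (v \<bullet>c v)" using v by (simp add: cinner_smult_right)
  ultimately have "k = cnj k" using p by (simp)
  then show ?thesis by (rule cnj_real)
qed

lemma eigenvalues_finite: fixes A :: "complex mat"
  assumes A: "A \<in> carrier_mat n n" shows "finite {k. eigenvalue A k}"
proof -
  have "char_poly A \<noteq> 0" using degree_monic_char_poly[OF A] by (auto)
  then have "finite {k. poly (char_poly A) k = 0}" by (rule poly_roots_finite)
  then show ?thesis using eigenvalue_root_char_poly[OF A] by (simp)
qed

lemma eigenvalues_nonempty: fixes A :: "complex mat"
  assumes A: "A \<in> carrier_mat n n" and n: "0 < n" shows "\<exists>k. eigenvalue A k"
  using exists_eigenvector[OF A n] A unfolding eigenvalue_def eigenvector_def by (auto)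

lemma lambda_max_props: fixes A :: "complex mat"
  assumes A: "A \<in> carrier_mat n n" and hA: "dag A = A" and n: "0 < n"
  shows "eigenvalue A (complex_of_real (lambda_max A))" "\<And>k. eigenvalue A k \<Longrightarrow> Re k \<le> lambda_max A"
    "eigenvalue A (complex_of_real (lambda_min A))" "\<And>k. eigenvalue A k \<Longrightarrow> lambda_min A \<le> Re k"
proof -
  let ?S = "Re ` {k. eigenvalue A k}"
  have fin: "finite ?S" using eigenvalues_finite[OF A] by (simp)
  have ne: "?S \<noteq> {}" using eigenvalues_nonempty[OF A n] by (auto)
  have "lambda_max A \<in> ?S" unfolding lambda_max_def using Max_in[OF fin ne] .
  then obtain k where k: "eigenvalue A k" "lambda_max A = Re k" by (auto)
  then show "eigenvalue A (complex_of_real (lambda_max A))" using eigenvalue_real[OF A hA k(1)] by (simp)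
  have "lambda_min A \<in> ?S" unfolding lambda_min_def using Min_in[OF fin ne] .
  then obtain k where k: "eigenvalue A k" "lambda_min A = Re k" by (auto)
  then show "eigenvalue A (complex_of_real (lambda_min A))" using eigenvalue_real[OF A hA k(1)] by (simp)
  fix k assume "eigenvalue A k"
  then have "Re k \<in> ?S" by (auto)
  then show "Re k \<le> lambda_max A" "lambda_min A \<le> Re k"
    unfolding lambda_max_def lambda_min_def using fin by (auto)
qed

lemma unitary_col_norm: assumes U: "U \<in> carrier_mat n n" and UU: "dag U * U = 1\<^sub>m n" and l: "l < n"
  shows "col U l \<bullet>c col U l = 1"
  using dag_mult_entry[OF U U l l] UU l by (simp)

lemma unitary_col_nonzero: assumes U: "U \<in> carrier_mat n n" and UU: "dag U * U = 1\<^sub>m n" and l: "l < n"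
  shows "col U l \<noteq> 0\<^sub>v n"
  using unitary_col_norm[OF U UU l] by (auto)

lemma spectral_d_bounds: fixes A :: "complex mat"
  assumes A: "A \<in> carrier_mat n n" and hA: "dag A = A"
    and U: "U \<in> carrier_mat n n" and UU: "dag U * U = 1\<^sub>m n"
    and eig: "\<forall>l<n. A *\<^sub>v col U l = complex_of_real (d l) \<cdot>\<^sub>v col U l" and l: "l < n"
  shows "lambda_min A \<le> d l \<and> d l \<le> lambda_max A"
proof -
  have "eigenvalue A (complex_of_real (d l))"
    unfolding eigenvalue_def eigenvector_def using eig l U A unitary_col_nonzero[OF U UU l]
    by (intro exI[of _ "col U l"]) auto
  moreover have n: "0 < n" using l by (simp)
  ultimately show ?thesis using lambda_max_props(2,4)[OF A hA n] by (force)
qed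

lemma dmat_mult_vec: assumes y: "y \<in> carrier_vec n"
  shows "dmat n d *\<^sub>v y = vec n (\<lambda>l. complex_of_real (d l) * y $ l)"
proof (rule eq_vecI)
  fix l assume "l < dim_vec (vec n (\<lambda>l. complex_of_real (d l) * y $ l))"
  then have l: "l < n" by (simp)
  have "(dmat n d *\<^sub>v y) $ l = (\<Sum>p<n. dmat n d $$ (l,p) * y $ p)"
    using y l by (simp add: mult_vec_sum del: index_mult_mat_vec)
  also have "\<dots> = (\<Sum>p<n. if p = l then complex_of_real (d l) * y $ l else 0)"
    using l by (intro sum.cong) (auto)
  finally show "(dmat n d *\<^sub>v y) $ l = vec n (\<lambda>l. complex_of_real (d l) * y $ l) $ l" using l by (simp)
qed (use y in auto)

lemma dmat_mult: assumes W: "W \<in> carrier_mat n m"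
  shows "dmat n d * W = mat n m (\<lambda>(i,j). complex_of_real (d i) * W $$ (i,j))"
proof (rule eq_matI)
  fix i j assume ij: "i < dim_row (mat n m (\<lambda>(i,j). complex_of_real (d i) * W $$ (i,j)))"
    "j < dim_col (mat n m (\<lambda>(i,j). complex_of_real (d i) * W $$ (i,j)))"
  then have i: "i < n" and j: "j < m" by (auto)
  have "(dmat n d * W) $$ (i,j) = (\<Sum>p<n. dmat n d $$ (i,p) * W $$ (p,j))"
    using W i j by (subst index_mult_sum) (auto)
  also have "\<dots> = (\<Sum>p<n. if p = i then complex_of_real (d i) * W $$ (i,j) else 0)"
    using i by (intro sum.cong) (auto)
  finally show "(dmat n d * W) $$ (i,j) = mat n m (\<lambda>(i,j). complex_of_real (d i) * W $$ (i,j)) $$ (i,j)"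
    using i j by (simp)
qed (use W in auto)

lemma dmat_mult_dmat: "dmat n a * dmat n b = dmat n (\<lambda>l. a l * b l)"
  unfolding dmat_mult[OF dmat_carrier] by (rule eq_matI) (auto simp: dmat_def)

lemma conj_carrier[simp]: "U \<in> carrier_mat n n \<Longrightarrow> U * dmat n d * dag U \<in> carrier_mat n n"
  by (metis dag_carrier dmat_carrier mult_carrier_mat)

lemma quad_form:
  assumes U: "U \<in> carrier_mat n n" and UU': "U * dag U = 1\<^sub>m n" and v: "v \<in> carrier_vec n"
  shows "((U * dmat n d * dag U) *\<^sub>v v) \<bullet>c v
     = (\<Sum>l<n. complex_of_real (d l) * ((dag U *\<^sub>v v) $ l * cnj ((dag U *\<^sub>v v) $ l)))"
    "v \<bullet>c v = (\<Sum>l<n. (dag U *\<^sub>v v) $ l * cnj ((dag U *\<^sub>v v) $ l))"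
proof -
  define y where "y = dag U *\<^sub>v v"
  have dU: "dag U \<in> carrier_mat n n" using U by (simp)
  have y: "y \<in> carrier_vec n" using dU v by (simp add: y_def)
  have UD: "U * dmat n d \<in> carrier_mat n n" using U by (simp)
  have "(U * dmat n d * dag U) *\<^sub>v v = (U * dmat n d) *\<^sub>v y" using assoc_mult_mat_vec[OF UD dU v] y_def by (simp)
  also have "\<dots> = U *\<^sub>v (dmat n d *\<^sub>v y)" using assoc_mult_mat_vec[OF U dmat_carrier y] by (simp)
  finally have e: "(U * dmat n d * dag U) *\<^sub>v v = U *\<^sub>v (dmat n d *\<^sub>v y)" .
  have "(U *\<^sub>v (dmat n d *\<^sub>v y)) \<bullet>c v = (dmat n d *\<^sub>v y) \<bullet>c (dag U *\<^sub>v v)"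
    using cinner_mult_dag[OF U mult_mat_vec_carrier[OF dmat_carrier y] v] by (simp)
  also have "\<dots> = (\<Sum>l<n. complex_of_real (d l) * (y $ l * cnj (y $ l)))"
    using y by (simp add: y_def[symmetric] dmat_mult_vec cinner_sum mult.assoc)
  finally show "((U * dmat n d * dag U) *\<^sub>v v) \<bullet>c v
     = (\<Sum>l<n. complex_of_real (d l) * ((dag U *\<^sub>v v) $ l * cnj ((dag U *\<^sub>v v) $ l)))"
    using e by (simp add: y_def)
  have "U *\<^sub>v y = v" using assoc_mult_mat_vec[OF U dU v] UU' v by (simp add: y_def)
  then have "v \<bullet>c v = (U *\<^sub>v y) \<bullet>c v" by (simp)
  also have "\<dots> = y \<bullet>c y" using cinner_mult_dag[OF U y v] by (simp add: y_def)
  finally show "v \<bullet>c v = (\<Sum>l<n. (dag U *\<^sub>v v) $ l * cnj ((dag U *\<^sub>v v) $ l))"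
    using y U by (simp add: cinner_sum y_def)
qed

lemma quad_form_re:
  assumes U: "U \<in> carrier_mat n n" and UU': "U * dag U = 1\<^sub>m n" and v: "v \<in> carrier_vec n"
  defines "nr \<equiv> \<lambda>l. (Re ((dag U *\<^sub>v v) $ l))\<^sup>2 + (Im ((dag U *\<^sub>v v) $ l))\<^sup>2"
  shows "Re (((U * dmat n d * dag U) *\<^sub>v v) \<bullet>c v) = (\<Sum>l<n. d l * nr l)"
    "Im (((U * dmat n d * dag U) *\<^sub>v v) \<bullet>c v) = 0"
    "Re (v \<bullet>c v) = (\<Sum>l<n. nr l)"
    "\<And>l. 0 \<le> nr l"
  using quad_form(1)[OF U UU' v, of d] quad_form(2)[OF U UU' v] unfolding nr_def
  by (simp_all add: complex_mult_cnj Re_sum Im_sum)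

lemma rayleigh: fixes M :: "complex mat"
  assumes M: "M \<in> carrier_mat n n" and hM: "dag M = M" and v: "v \<in> carrier_vec n"
  shows "lambda_min M * Re (v \<bullet>c v) \<le> Re ((M *\<^sub>v v) \<bullet>c v) \<and> Re ((M *\<^sub>v v) \<bullet>c v) \<le> lambda_max M * Re (v \<bullet>c v)"
proof -
  obtain U d where U: "U \<in> carrier_mat n n" "dag U * U = 1\<^sub>m n" "U * dag U = 1\<^sub>m n"
    and Md: "M = U * dmat n d * dag U" and eig: "\<forall>l<n. M *\<^sub>v col U l = complex_of_real (d l) \<cdot>\<^sub>v col U l"
    using spectral[OF M hM] by (blast)
  have b: "lambda_min M \<le> d l \<and> d l \<le> lambda_max M" if "l < n" for l
    using spectral_d_bounds[OF M hM U(1,2) eig that] .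
  note q = quad_form_re(1-3)[OF U(1,3) v] quad_form_re(4)[OF U(1,3) v]
  define nr where "nr = (\<lambda>l. (Re ((dag U *\<^sub>v v) $ l))\<^sup>2 + (Im ((dag U *\<^sub>v v) $ l))\<^sup>2)"
  have nr: "0 \<le> nr l" for l by (simp add: nr_def)
  have "Re ((M *\<^sub>v v) \<bullet>c v) = (\<Sum>l<n. d l * nr l)" using q(1) Md by (simp add: nr_def)
  moreover have "Re (v \<bullet>c v) = (\<Sum>l<n. nr l)" using q(3) by (simp add: nr_def)
  moreover have "(\<Sum>l<n. d l * nr l) \<le> (\<Sum>l<n. lambda_max M * nr l)"
    using b nr by (intro sum_mono mult_right_mono) (auto)
  moreover have "(\<Sum>l<n. lambda_min M * nr l) \<le> (\<Sum>l<n. d l * nr l)"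
    using b nr by (intro sum_mono mult_right_mono) (auto)
  ultimately show ?thesis by (simp add: sum_distrib_left)
qed

lemma dag_conj: assumes U: "U \<in> carrier_mat n n"
  shows "dag (U * dmat n d * dag U) = U * dmat n d * dag U"
proof -
  have UD: "U * dmat n d \<in> carrier_mat n n" using U by (simp)
  have dU: "dag U \<in> carrier_mat n n" using U by (simp)
  have e1: "dag (U * dmat n d * dag U) = dag (dag U) * dag (U * dmat n d)"
    using dag_mult[OF UD dU] .
  have e2: "dag (U * dmat n d) = dmat n d * dag U" using dag_mult[OF U dmat_carrier] by (simp)
  have e3: "U * (dmat n d * dag U) = U * dmat n d * dag U" using assoc_mult_mat[OF U dmat_carrier dU] by (simp)
  show ?thesis using e1 e2 e3 by (simp)
qed

lemma psd_of_decomp: assumes U: "U \<in> carrier_mat n n" and UU': "U * dag U = 1\<^sub>m n"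
  and d: "\<forall>l<n. 0 \<le> d l"
  shows "psd n (U * dmat n d * dag U)"
  unfolding psd_def
proof (intro conjI ballI)
  show "U * dmat n d * dag U \<in> carrier_mat n n" using U by (rule conj_carrier)
  show "dag (U * dmat n d * dag U) = U * dmat n d * dag U" using dag_conj[OF U] .
  fix v :: "complex vec" assume v: "v \<in> carrier_vec n"
  note q = quad_form_re(1-3)[OF U UU' v] quad_form_re(4)[OF U UU' v]
  show "Im (((U * dmat n d * dag U) *\<^sub>v v) \<bullet>c v) = 0" using q(2) .
  show "0 \<le> Re (((U * dmat n d * dag U) *\<^sub>v v) \<bullet>c v)" unfolding q(1)
    using d by (intro sum_nonneg mult_nonneg_nonneg) auto
qed

lemma psd_decomp: assumes T: "psd n T"
  shows "\<exists>V e. V \<in> carrier_mat n n \<and> dag V * V = 1\<^sub>m n \<and> V * dag V = 1\<^sub>m n \<and>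
     T = V * dmat n e * dag V \<and> (\<forall>l<n. 0 \<le> e l)"
proof -
  have Tc: "T \<in> carrier_mat n n" and hT: "dag T = T" using T unfolding psd_def by (auto)
  obtain V e where V: "V \<in> carrier_mat n n" "dag V * V = 1\<^sub>m n" "V * dag V = 1\<^sub>m n"
    and Te: "T = V * dmat n e * dag V" and eig: "\<forall>l<n. T *\<^sub>v col V l = complex_of_real (e l) \<cdot>\<^sub>v col V l"
    using spectral[OF Tc hT] by (blast)
  have "0 \<le> e l" if l: "l < n" for l
  proof -
    have c: "col V l \<in> carrier_vec n" using V l by (simp)
    have "(T *\<^sub>v col V l) \<bullet>c col V l = complex_of_real (e l)"
      using eig l unitary_col_norm[OF V(1,2) l] c by (simp add: cinner_smult_left)
    moreover have "0 \<le> Re ((T *\<^sub>v col V l) \<bullet>c col V l)" using T c unfolding psd_def by (auto)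
    ultimately show ?thesis by (simp)
  qed
  then show ?thesis using V Te by (blast)
qed

lemma mult_carrier_nn: "A \<in> carrier_mat n n \<Longrightarrow> B \<in> carrier_mat n n \<Longrightarrow> A * B \<in> carrier_mat n n"
  by (rule mult_carrier_mat)

lemma assoc_nn: "A \<in> carrier_mat n n \<Longrightarrow> B \<in> carrier_mat n n \<Longrightarrow> C \<in> carrier_mat n n \<Longrightarrow> A * B * C = A * (B * C)"
  by (rule assoc_mult_mat)

lemma cancel_nn: fixes U V X :: "complex mat" shows "U \<in> carrier_mat n n \<Longrightarrow> V \<in> carrier_mat n n \<Longrightarrow> V * U = 1\<^sub>m n \<Longrightarrow> X \<in> carrier_mat n n \<Longrightarrow> V * (U * X) = X"
  using assoc_mult_mat[of V n n U n X n] left_mult_one_mat[of X n n] by (simp)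

lemma dmat_dmat_nn: "X \<in> carrier_mat n n \<Longrightarrow> dmat n a * (dmat n b * X) = dmat n (\<lambda>l. a l * b l) * X"
  using assoc_mult_mat[OF dmat_carrier dmat_carrier, of X n, symmetric] dmat_mult_dmat by (simp)

lemma sqrt_unique:
  assumes U: "U \<in> carrier_mat n n" "dag U * U = 1\<^sub>m n" "U * dag U = 1\<^sub>m n"
    and T: "psd n T" and TT: "T * T = U * dmat n (\<lambda>l. (d l)\<^sup>2) * dag U"
  shows "T = U * dmat n (\<lambda>l. \<bar>d l\<bar>) * dag U"
proof -
  obtain V e where V: "V \<in> carrier_mat n n" "dag V * V = 1\<^sub>m n" "V * dag V = 1\<^sub>m n"
    and Te: "T = V * dmat n e * dag V" and e: "\<forall>l<n. 0 \<le> e l"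
    using psd_decomp[OF T] by (blast)
  have dU: "dag U \<in> carrier_mat n n" and dV: "dag V \<in> carrier_mat n n" using U V by (auto)
  note c = U(1) V(1) dU dV dmat_carrier
  note simps = assoc_nn[of _ n] mult_carrier_nn[of _ n] c cancel_nn[of U n "dag U"] cancel_nn[of V n "dag V"]
     cancel_nn[of "dag U" n U] cancel_nn[of "dag V" n V] U(2,3) V(2,3) dmat_dmat_nn
     carrier_matD[OF U(1)] carrier_matD[OF V(1)]
  have TT2: "T * T = V * dmat n (\<lambda>l. (e l)\<^sup>2) * dag V"
    unfolding Te by (simp add: simps power2_eq_square)
  define W where "W = dag U * V"
  have W: "W \<in> carrier_mat n n" using mult_carrier_nn[OF dU V(1)] by (simp add: W_def)
  have "dag U * (T * T) * V = dag U * (T * T) * V" ..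
  then have key: "dmat n (\<lambda>l. (d l)\<^sup>2) * W = W * dmat n (\<lambda>l. (e l)\<^sup>2)"
    using arg_cong[OF TT, of "\<lambda>Z. dag U * Z * V"] arg_cong[OF TT2, of "\<lambda>Z. dag U * Z * V"]
    unfolding W_def by (simp add: simps)
  have key2: "dmat n (\<lambda>l. \<bar>d l\<bar>) * W = W * dmat n e"
  proof (rule eq_matI)
    fix i j assume "i < dim_row (W * dmat n e)" "j < dim_col (W * dmat n e)"
    then have i: "i < n" and j: "j < n" using W by (auto)
    have k: "complex_of_real ((d i)\<^sup>2) * W $$ (i,j) = W $$ (i,j) * complex_of_real ((e j)\<^sup>2)"
      using arg_cong[OF key, of "\<lambda>Z. Z $$ (i,j)"] i j W by (simp add: dmat_mult mult_dmat)
    have "complex_of_real \<bar>d i\<bar> * W $$ (i,j) = W $$ (i,j) * complex_of_real (e j)"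
    proof (cases "W $$ (i,j) = 0")
      case False
      then have "complex_of_real ((d i)\<^sup>2) = complex_of_real ((e j)\<^sup>2)" using k by (simp add: mult.commute)
      then have "(d i)\<^sup>2 = (e j)\<^sup>2" using of_real_eq_iff by (blast)
      then have "\<bar>d i\<bar> = e j" using e j by (metis abs_of_nonneg real_sqrt_abs)
      then show ?thesis by (simp add: mult.commute)
    qed simp
    then show "(dmat n (\<lambda>l. \<bar>d l\<bar>) * W) $$ (i,j) = (W * dmat n e) $$ (i,j)"
      using i j W by (simp add: dmat_mult mult_dmat)
  qed (use W in auto)
  define S where "S = U * dmat n (\<lambda>l. \<bar>d l\<bar>) * dag U"
  have SV: "S * V = V * dmat n e"
  proof -
    have "S * V = U * (dmat n (\<lambda>l. \<bar>d l\<bar>) * W)" unfolding S_def W_def by (simp add: simps)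
    also have "\<dots> = U * (W * dmat n e)" using key2 by (simp)
    also have "\<dots> = V * dmat n e" unfolding W_def by (simp add: simps)
    finally show ?thesis .
  qed
  have "T = (S * V) * dag V" unfolding SV Te ..
  also have "\<dots> = S" unfolding S_def by (simp add: simps)
  finally show ?thesis unfolding S_def .
qed

lemma mtrace_conj: assumes U: "U \<in> carrier_mat n n" "dag U * U = 1\<^sub>m n"
  shows "mtrace (U * dmat n d * dag U) = (\<Sum>l<n. complex_of_real (d l))"
proof -
  have dU: "dag U \<in> carrier_mat n n" using U by (simp)
  have UD: "U * dmat n d \<in> carrier_mat n n" using U by (simp)
  have "mtrace (U * dmat n d * dag U) = mtrace (dag U * (U * dmat n d))" using mtrace_comm[OF UD dU] .
  also have "dag U * (U * dmat n d) = dmat n d" using cancel_nn[OF U(1) dU U(2) dmat_carrier] .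
  also have "mtrace (dmat n d) = (\<Sum>l<n. complex_of_real (d l))" by (simp add: mtrace_def)
  finally show ?thesis .
qed

lemma mabs_eq: fixes X :: "complex mat"
  assumes X: "X \<in> carrier_mat n n" "dag X = X" and T: "psd n T" "T * T = X * X"
  shows "mabs X = T"
proof -
  obtain U d where U: "U \<in> carrier_mat n n" "dag U * U = 1\<^sub>m n" "U * dag U = 1\<^sub>m n"
    and Xd: "X = U * dmat n d * dag U"
    using spectral[OF X] by (blast)
  have dU: "dag U \<in> carrier_mat n n" using U by (auto)
  note c = U(1) dU dmat_carrier
  note simps = assoc_nn[of _ n] mult_carrier_nn[of _ n] c cancel_nn[of U n "dag U"]
     cancel_nn[of "dag U" n U] U(2,3) dmat_dmat_nn carrier_matD[OF U(1)]
  define S where "S = U * dmat n (\<lambda>l. \<bar>d l\<bar>) * dag U"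
  have XX: "X * X = U * dmat n (\<lambda>l. (d l)\<^sup>2) * dag U"
    unfolding Xd by (simp add: simps power2_eq_square)
  have uniq: "T' = S" if "psd n T'" "T' * T' = dag X * X" for T'
    using sqrt_unique[OF U that(1)] that(2) X(2) XX by (simp add: S_def)
  have SS: "S * S = dag X * X"
    unfolding S_def X(2) XX by (simp add: simps power2_eq_square abs_mult_self_eq)
  have Spsd: "psd n S" unfolding S_def using psd_of_decomp[OF U(1,3)] by (simp)
  have dX: "dim_col X = n" using X(1) by (simp)
  have "mabs X = S" unfolding mabs_def dX by (rule the_equality) (use Spsd SS uniq in blast)+
  moreover have "T = S" using uniq T X(2) by (simp)
  ultimately show ?thesis by (simp)
qed

lemma trace_norm_decomp: fixes X :: "complex mat"
  assumes X: "X \<in> carrier_mat n n" "dag X = X"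
    and U: "U \<in> carrier_mat n n" "dag U * U = 1\<^sub>m n" "U * dag U = 1\<^sub>m n"
    and Xd: "X = U * dmat n d * dag U"
  shows "trace_norm X = (\<Sum>l<n. \<bar>d l\<bar>)"
proof -
  have dU: "dag U \<in> carrier_mat n n" using U by (auto)
  note c = U(1) dU dmat_carrier
  note simps = assoc_nn[of _ n] mult_carrier_nn[of _ n] c cancel_nn[of U n "dag U"]
     cancel_nn[of "dag U" n U] U(2,3) dmat_dmat_nn carrier_matD[OF U(1)]
  define S where "S = U * dmat n (\<lambda>l. \<bar>d l\<bar>) * dag U"
  have SS: "S * S = X * X"
    unfolding S_def Xd by (simp add: simps power2_eq_square abs_mult_self_eq)
  have Spsd: "psd n S" unfolding S_def using psd_of_decomp[OF U(1,3)] by (simp)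
  have "mabs X = S" using mabs_eq[OF X Spsd SS] .
  then show ?thesis unfolding trace_norm_def S_def using mtrace_conj[OF U(1,2)] by (simp add: Re_sum)
qed

lemma trace_bound:
  fixes M :: "complex mat"
  assumes M: "M \<in> carrier_mat n n" "dag M = M"
    and U: "U \<in> carrier_mat n n" "dag U * U = 1\<^sub>m n" "U * dag U = 1\<^sub>m n"
    and tr0: "(\<Sum>l<n. d l) = 0"
  shows "Re (mtrace (M * (U * dmat n d * dag U))) \<le> (lambda_max M - lambda_min M) / 2 * (\<Sum>l<n. \<bar>d l\<bar>)"
proof -
  have dU: "dag U \<in> carrier_mat n n" using U by (auto)
  note c = U(1) dU dmat_carrier M(1)
  note simps = assoc_nn[of _ n] mult_carrier_nn[of _ n] c
  define m where "m l = (M *\<^sub>v col U l) \<bullet>c col U l" for l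
  have MUD: "M * U * dmat n d \<in> carrier_mat n n" using c by (simp add: simps)
  have "mtrace (M * (U * dmat n d * dag U)) = mtrace ((M * U * dmat n d) * dag U)" by (simp add: simps)
  also have "\<dots> = mtrace (dag U * (M * U * dmat n d))" using mtrace_comm[OF MUD dU] .
  also have "dag U * (M * U * dmat n d) = (dag U * M * U) * dmat n d" by (simp add: simps)
  also have "mtrace \<dots> = (\<Sum>l<n. m l * complex_of_real (d l))"
  proof -
    have B: "dag U * M * U \<in> carrier_mat n n" using c by (simp add: simps)
    show ?thesis unfolding mult_dmat[OF B] mtrace_def using dag_A_U_entry[OF U(1) M(1)]
      by (simp add: m_def)
  qed
  finally have tr: "Re (mtrace (M * (U * dmat n d * dag U))) = (\<Sum>l<n. Re (m l) * d l)" by (simp add: Re_sum)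
  define a where "a = lambda_min M"
  define b where "b = lambda_max M"
  have mb: "a \<le> Re (m l) \<and> Re (m l) \<le> b" if l: "l < n" for l
  proof -
    have cl: "col U l \<in> carrier_vec n" using U l by (simp)
    have "Re (col U l \<bullet>c col U l) = 1" using unitary_col_norm[OF U(1,2) l] by (simp)
    then show ?thesis using rayleigh[OF M cl] unfolding m_def a_def b_def by (simp)
  qed
  have "(\<Sum>l<n. Re (m l) * d l) = (\<Sum>l<n. (Re (m l) - (a + b) / 2) * d l) + (a + b) / 2 * (\<Sum>l<n. d l)"
    by (simp add: sum_distrib_left left_diff_distrib sum_subtractf)
  also have "\<dots> = (\<Sum>l<n. (Re (m l) - (a + b) / 2) * d l)" using tr0 by (simp)
  also have "\<dots> \<le> (\<Sum>l<n. (b - a) / 2 * \<bar>d l\<bar>)"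
  proof (rule sum_mono)
    fix l assume "l \<in> {..<n}"
    then have l: "l < n" by (simp)
    have "(Re (m l) - (a + b) / 2) * d l \<le> \<bar>Re (m l) - (a + b) / 2\<bar> * \<bar>d l\<bar>"
      by (metis abs_ge_self abs_mult)
    also have "\<dots> \<le> (b - a) / 2 * \<bar>d l\<bar>"
    proof (rule mult_right_mono)
      have h1: "a \<le> Re (m l)" and h2: "Re (m l) \<le> b" using mb[OF l] by (auto)
      have "Re (m l) - (a + b) / 2 \<le> (b - a) / 2" using h2 by (simp add: field_simps)
      moreover have "- (Re (m l) - (a + b) / 2) \<le> (b - a) / 2" using h1 by (simp add: field_simps)
      ultimately show "\<bar>Re (m l) - (a + b) / 2\<bar> \<le> (b - a) / 2" unfolding abs_le_iff by (blast)
    qed simp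
    finally show "(Re (m l) - (a + b) / 2) * d l \<le> (b - a) / 2 * \<bar>d l\<bar>" .
  qed
  finally show ?thesis using tr unfolding a_def b_def by (simp add: sum_distrib_left)
qed

declare mult_carrier_nn[simp]

lemma mtrace_mult_msum_left:
  assumes Q: "Q \<in> carrier_mat n n" and f: "\<And>x. x \<in> set xs \<Longrightarrow> f x \<in> carrier_mat n n"
  shows "mtrace (Q * msum n (map f xs)) = (\<Sum>x\<leftarrow>xs. mtrace (Q * f x))"
  using f
proof (induct xs)
  case Nil
  then show ?case using right_mult_zero_mat[OF Q, of n] by (simp)
next
  case (Cons a xs)
  have fa: "f a \<in> carrier_mat n n" and fs: "msum n (map f xs) \<in> carrier_mat n n" using Cons.prems by (auto)
  have "Q * msum n (map f (a # xs)) = Q * f a + Q * msum n (map f xs)"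
    using mult_add_distrib_mat[OF Q fa fs] by (simp)
  then have "mtrace (Q * msum n (map f (a # xs))) = mtrace (Q * f a) + mtrace (Q * msum n (map f xs))"
    using mtrace_add[OF mult_carrier_nn[OF Q fa] mult_carrier_nn[OF Q fs]] by (simp)
  then show ?case using Cons by (simp)
qed

lemma mtrace_mult_msum_right:
  assumes Q: "Q \<in> carrier_mat n n" and f: "\<And>x. x \<in> set xs \<Longrightarrow> f x \<in> carrier_mat n n"
  shows "mtrace (msum n (map f xs) * Q) = (\<Sum>x\<leftarrow>xs. mtrace (f x * Q))"
  using f
proof (induct xs)
  case Nil
  then show ?case using left_mult_zero_mat[OF Q, of n] by (simp)
next
  case (Cons a xs)
  have fa: "f a \<in> carrier_mat n n" and fs: "msum n (map f xs) \<in> carrier_mat n n" using Cons.prems by (auto)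
  have "msum n (map f (a # xs)) * Q = f a * Q + msum n (map f xs) * Q"
    using add_mult_distrib_mat[OF fa fs Q] by (simp)
  then have "mtrace (msum n (map f (a # xs)) * Q) = mtrace (f a * Q) + mtrace (msum n (map f xs) * Q)"
    using mtrace_add[OF mult_carrier_nn[OF fa Q] mult_carrier_nn[OF fs Q]] by (simp)
  then show ?case using Cons by (simp)
qed

lemma mtrace_cyc3:
  assumes A: "A \<in> carrier_mat n n" and E: "E \<in> carrier_mat n n" and R: "R \<in> carrier_mat n n"
  shows "mtrace (A * (E * R * dag E)) = mtrace (dag E * A * E * R)"
proof -
  have dE: "dag E \<in> carrier_mat n n" using E by (simp)
  note simps = assoc_nn[of _ n] mult_carrier_nn[of _ n] A E R dE
  have AER: "A * E * R \<in> carrier_mat n n" by (simp add: simps)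
  have "A * (E * R * dag E) = (A * E * R) * dag E" by (simp add: simps)
  then have "mtrace (A * (E * R * dag E)) = mtrace (dag E * (A * E * R))" using mtrace_comm[OF AER dE] by (simp)
  also have "dag E * (A * E * R) = dag E * A * E * R" by (simp add: simps)
  finally show ?thesis .
qed

lemma model_carrier: assumes "decision_model n Es Ms"
  shows "\<And>E. E \<in> set Es \<Longrightarrow> E \<in> carrier_mat n n" "\<And>M. M \<in> set Ms \<Longrightarrow> M \<in> carrier_mat n n"
    "\<And>i. i < length Ms \<Longrightarrow> Ms ! i \<in> carrier_mat n n"
  using assms unfolding decision_model_def by (auto)

lemma adj_channel_carrier: assumes "\<And>E. E \<in> set Es \<Longrightarrow> E \<in> carrier_mat n n" "Q \<in> carrier_mat n n"
  shows "adj_channel n Es Q \<in> carrier_mat n n"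
  unfolding adj_channel_def using assms by (intro msum_map_carrier) (metis dag_carrier mult_carrier_mat)

lemma channel_carrier: assumes "\<And>E. E \<in> set Es \<Longrightarrow> E \<in> carrier_mat n n" "R \<in> carrier_mat n n"
  shows "channel n Es R \<in> carrier_mat n n"
  unfolding channel_def using assms by (intro msum_map_carrier) (metis dag_carrier mult_carrier_mat)

lemma dag_msum: "(\<And>x. x \<in> set xs \<Longrightarrow> x \<in> carrier_mat n n) \<Longrightarrow> dag (msum n xs) = msum n (map dag xs)"
proof (induct xs)
  case (Cons a xs)
  have "a \<in> carrier_mat n n" "msum n xs \<in> carrier_mat n n" using Cons.prems by (auto)
  then show ?case using Cons dag_add[of a n n "msum n xs"] by (simp)
qed simp

lemma dag_adj_channel: assumes Es: "\<And>E. E \<in> set Es \<Longrightarrow> E \<in> carrier_mat n n" and Q: "Q \<in> carrier_mat n n"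
  shows "dag (adj_channel n Es Q) = adj_channel n Es (dag Q)"
proof -
  have c: "dag E * Q * E \<in> carrier_mat n n" if "E \<in> set Es" for E using Es[OF that] Q by (metis dag_carrier mult_carrier_mat)
  have "dag (adj_channel n Es Q) = msum n (map dag (map (\<lambda>E. dag E * Q * E) Es))"
    unfolding adj_channel_def by (rule dag_msum) (use c in auto)
  also have "\<dots> = adj_channel n Es (dag Q)" unfolding adj_channel_def
  proof -
    have "dag (dag E * Q * E) = dag E * dag Q * E" if E: "E \<in> set Es" for E
    proof -
      have e: "E \<in> carrier_mat n n" using Es[OF E] .
      have dEQ: "dag E * Q \<in> carrier_mat n n" using e Q by (simp)
      have "dag (dag E * Q * E) = dag E * dag (dag E * Q)" using dag_mult[OF dEQ e] .
      also have "dag (dag E * Q) = dag Q * E" using dag_mult[OF dag_carrier[OF e] Q] by (simp)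
      also have "dag E * (dag Q * E) = dag E * dag Q * E" using assoc_mult_mat[of "dag E" n n "dag Q" n E n] e Q by (simp)
      finally show ?thesis .
    qed
    then have "map dag (map (\<lambda>E. dag E * Q * E) Es) = map (\<lambda>E. dag E * dag Q * E) Es" by (simp)
    then show "msum n (map dag (map (\<lambda>E. dag E * Q * E) Es)) = msum n (map (\<lambda>E. dag E * dag Q * E) Es)"
      by (rule arg_cong)
  qed
  finally show ?thesis .
qed

definition Fop :: "nat \<Rightarrow> complex mat list \<Rightarrow> complex mat list \<Rightarrow> nat \<Rightarrow> complex mat" where
  "Fop n Es Ms i = adj_channel n Es (dag (Ms ! i) * Ms ! i)"

lemma Fop_carrier: assumes "decision_model n Es Ms" "i < length Ms"
  shows "Fop n Es Ms i \<in> carrier_mat n n"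
  unfolding Fop_def using model_carrier[OF assms(1)] assms(2)
  by (intro adj_channel_carrier) (auto intro: mult_carrier_nn)

lemma Fop_herm: assumes "decision_model n Es Ms" "i < length Ms"
  shows "dag (Fop n Es Ms i) = Fop n Es Ms i"
proof -
  have M: "Ms ! i \<in> carrier_mat n n" using model_carrier(3)[OF assms] .
  have MM: "dag (Ms ! i) * Ms ! i \<in> carrier_mat n n" using M by (simp)
  have "dag (dag (Ms ! i) * Ms ! i) = dag (Ms ! i) * Ms ! i" using dag_mult[OF dag_carrier[OF M] M] by (simp)
  then show ?thesis unfolding Fop_def using dag_adj_channel[OF model_carrier(1)[OF assms(1)] MM] by (simp)
qed

lemma model_out_Fop: assumes model: "decision_model n Es Ms" and i: "i < length Ms" and R: "R \<in> carrier_mat n n"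
  shows "model_out n Es Ms R i = Re (mtrace (Fop n Es Ms i * R))"
proof -
  note Es = model_carrier(1)[OF model]
  define M where "M = Ms ! i"
  have M: "M \<in> carrier_mat n n" using model_carrier(3)[OF model i] by (simp add: M_def)
  have dM: "dag M \<in> carrier_mat n n" using M by (simp)
  define Q where "Q = dag M * M"
  have Q: "Q \<in> carrier_mat n n" using M by (simp add: Q_def)
  define C where "C = channel n Es R"
  have C: "C \<in> carrier_mat n n" using channel_carrier[OF Es R] by (simp add: C_def)
  have MC: "M * C \<in> carrier_mat n n" using M C by (simp)
  have g: "E * R * dag E \<in> carrier_mat n n" if "E \<in> set Es" for E using Es[OF that] R by (metis dag_carrier mult_carrier_mat)
  have h: "dag E * Q * E \<in> carrier_mat n n" if "E \<in> set Es" for E using Es[OF that] Q by (metis dag_carrier mult_carrier_mat)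
  have "mtrace (M * C * dag M) = mtrace (dag M * (M * C))" using mtrace_comm[OF MC dM] .
  also have "dag M * (M * C) = Q * C" using assoc_mult_mat[OF dM M C] by (simp add: Q_def)
  also have "mtrace (Q * C) = (\<Sum>E\<leftarrow>Es. mtrace (Q * (E * R * dag E)))"
    unfolding C_def channel_def using mtrace_mult_msum_left[OF Q, of Es] g by (simp)
  also have "\<dots> = (\<Sum>E\<leftarrow>Es. mtrace (dag E * Q * E * R))"
    using mtrace_cyc3[OF Q _ R] Es by (intro arg_cong[of _ _ sum_list] map_cong) (auto)
  also have "\<dots> = mtrace (adj_channel n Es Q * R)"
    unfolding adj_channel_def using mtrace_mult_msum_right[OF R, of Es] h by (simp)
  finally show ?thesis unfolding model_out_def Fop_def M_def Q_def C_def by (simp)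
qed

lemma sum_model_out: assumes model: "decision_model n Es Ms" and R: "R \<in> carrier_mat n n"
  shows "(\<Sum>i<length Ms. model_out n Es Ms R i) = Re (mtrace R)"
proof -
  note Es = model_carrier(1)[OF model]
  note Msc = model_carrier(2)[OF model]
  define C where "C = channel n Es R"
  have C: "C \<in> carrier_mat n n" using channel_carrier[OF Es R] by (simp add: C_def)
  have mo: "model_out n Es Ms R i = Re (mtrace (dag (Ms ! i) * Ms ! i * C))" if i: "i < length Ms" for i
  proof -
    have M: "Ms ! i \<in> carrier_mat n n" using model_carrier(3)[OF model i] .
    have MC: "Ms ! i * C \<in> carrier_mat n n" using M C by (simp)
    have "mtrace (Ms ! i * C * dag (Ms ! i)) = mtrace (dag (Ms ! i) * (Ms ! i * C))"
      using mtrace_comm[OF MC dag_carrier[OF M]] .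
    also have "dag (Ms ! i) * (Ms ! i * C) = dag (Ms ! i) * Ms ! i * C"
      using assoc_mult_mat[OF dag_carrier[OF M] M C] by (simp)
    finally show ?thesis unfolding model_out_def C_def by (simp)
  qed
  have "(\<Sum>i<length Ms. model_out n Es Ms R i) = Re (\<Sum>i<length Ms. mtrace (dag (Ms ! i) * Ms ! i * C))"
    using mo by (simp add: Re_sum)
  also have "(\<Sum>i<length Ms. mtrace (dag (Ms ! i) * Ms ! i * C)) = (\<Sum>M\<leftarrow>Ms. mtrace (dag M * M * C))"
    by (simp add: sum_list_sum_nth atLeast0LessThan)
  also have "\<dots> = mtrace (msum n (map (\<lambda>M. dag M * M) Ms) * C)"
    using mtrace_mult_msum_right[OF C, of Ms "\<lambda>M. dag M * M"] Msc by (simp add: mult_carrier_nn)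
  also have "msum n (map (\<lambda>M. dag M * M) Ms) = 1\<^sub>m n" using model unfolding decision_model_def by (simp)
  also have "mtrace (1\<^sub>m n * C) = mtrace C" using C by (simp)
  also have "mtrace C = (\<Sum>E\<leftarrow>Es. mtrace (E * R * dag E))"
    unfolding C_def channel_def using Es R by (intro mtrace_msum_map) (metis dag_carrier mult_carrier_mat)
  also have "\<dots> = (\<Sum>E\<leftarrow>Es. mtrace (dag E * E * R))"
  proof (intro arg_cong[of _ _ sum_list] map_cong refl)
    fix E assume "E \<in> set Es"
    then have E: "E \<in> carrier_mat n n" using Es by (simp)
    have ER: "E * R \<in> carrier_mat n n" using E R by (simp)
    have "mtrace (E * R * dag E) = mtrace (dag E * (E * R))" using mtrace_comm[OF ER dag_carrier[OF E]] .
    also have "dag E * (E * R) = dag E * E * R" using assoc_mult_mat[OF dag_carrier[OF E] E R] by (simp)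
    finally show "mtrace (E * R * dag E) = mtrace (dag E * E * R)" .
  qed
  also have "\<dots> = mtrace (msum n (map (\<lambda>E. dag E * E) Es) * R)"
    using mtrace_mult_msum_right[OF R, of Es "\<lambda>E. dag E * E"] Es by (simp add: mult_carrier_nn)
  also have "msum n (map (\<lambda>E. dag E * E) Es) = 1\<^sub>m n" using model unfolding decision_model_def by (simp)
  finally show ?thesis using R by (simp)
qed

lemma M_set_eq: "M_set n Es Ms A = msum n (map (Fop n Es Ms) (sorted_list_of_set A))"
  unfolding M_set_def Fop_def by (simp)

lemma M_set_carrier: assumes model: "decision_model n Es Ms" and A: "A \<subseteq> {..<length Ms}"
  shows "M_set n Es Ms A \<in> carrier_mat n n"
proof -
  have fin: "finite A" using A finite_subset by (blast)
  show ?thesis unfolding M_set_eq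
    using Fop_carrier[OF model] A fin by (intro msum_map_carrier) (auto)
qed

lemma M_set_herm: assumes model: "decision_model n Es Ms" and A: "A \<subseteq> {..<length Ms}"
  shows "dag (M_set n Es Ms A) = M_set n Es Ms A"
proof -
  have fin: "finite A" using A finite_subset by (blast)
  have c: "x \<in> set (map (Fop n Es Ms) (sorted_list_of_set A)) \<Longrightarrow> x \<in> carrier_mat n n" for x
    using Fop_carrier[OF model] A fin by (auto)
  have "dag (msum n (map (Fop n Es Ms) (sorted_list_of_set A))) = msum n (map dag (map (Fop n Es Ms) (sorted_list_of_set A)))"
    by (rule dag_msum) (use c in auto)
  also have "map dag (map (Fop n Es Ms) (sorted_list_of_set A)) = map (Fop n Es Ms) (sorted_list_of_set A)"
    using Fop_herm[OF model] A fin by (auto intro!: map_idI)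
  finally show ?thesis unfolding M_set_eq .
qed

lemma mtrace_M_set: assumes model: "decision_model n Es Ms" and A: "A \<subseteq> {..<length Ms}"
  and X: "X \<in> carrier_mat n n"
  shows "mtrace (M_set n Es Ms A * X) = (\<Sum>i\<in>A. mtrace (Fop n Es Ms i * X))"
proof -
  have fin: "finite A" using A finite_subset by (blast)
  have "mtrace (M_set n Es Ms A * X) = (\<Sum>i\<leftarrow>sorted_list_of_set A. mtrace (Fop n Es Ms i * X))"
    unfolding M_set_eq using Fop_carrier[OF model] A fin by (intro mtrace_mult_msum_right[OF X]) (auto)
  also have "\<dots> = (\<Sum>i\<in>A. mtrace (Fop n Es Ms i * X))"
    using fin by (simp add: sum_list_distinct_conv_sum_set)
  finally show ?thesis .
qed

lemma tv_upper: fixes p q :: "nat \<Rightarrow> real"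
  assumes z: "(\<Sum>i<m. p i - q i) = 0"
  shows "tv_dist m p q = (\<Sum>i\<in>{i. i<m \<and> q i \<le> p i}. p i - q i)"
proof -
  let ?P = "{i. i<m \<and> q i \<le> p i}" and ?N = "{i. i<m \<and> \<not> q i \<le> p i}"
  have un: "{..<m} = ?P \<union> ?N" by (auto)
  have dis: "?P \<inter> ?N = {}" by (auto)
  have fP: "finite ?P" and fN: "finite ?N" by (auto)
  have "(\<Sum>i<m. \<bar>p i - q i\<bar>) = (\<Sum>i\<in>?P. \<bar>p i - q i\<bar>) + (\<Sum>i\<in>?N. \<bar>p i - q i\<bar>)"
    unfolding un by (rule sum.union_disjoint[OF fP fN dis])
  also have "(\<Sum>i\<in>?P. \<bar>p i - q i\<bar>) = (\<Sum>i\<in>?P. p i - q i)" by (intro sum.cong) (auto)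
  also have "(\<Sum>i\<in>?N. \<bar>p i - q i\<bar>) = - (\<Sum>i\<in>?N. p i - q i)"
    by (simp add: sum_negf[symmetric])
  finally have a: "(\<Sum>i<m. \<bar>p i - q i\<bar>) = (\<Sum>i\<in>?P. p i - q i) - (\<Sum>i\<in>?N. p i - q i)" by (simp)
  have "(\<Sum>i<m. p i - q i) = (\<Sum>i\<in>?P. p i - q i) + (\<Sum>i\<in>?N. p i - q i)"
    unfolding un by (rule sum.union_disjoint[OF fP fN dis])
  then have "(\<Sum>i\<in>?N. p i - q i) = - (\<Sum>i\<in>?P. p i - q i)" using z by (simp)
  then show ?thesis unfolding tv_dist_def using a by (simp)
qed

lemma tv_lower: fixes p q :: "nat \<Rightarrow> real"
  assumes z: "(\<Sum>i<m. p i - q i) = 0" and A: "A \<subseteq> {..<m}"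
  shows "(\<Sum>i\<in>A. p i - q i) \<le> tv_dist m p q"
proof -
  let ?B = "{..<m} - A"
  have fA: "finite A" using A finite_subset by (blast)
  have fB: "finite ?B" by (simp)
  have un: "{..<m} = A \<union> ?B" using A by (auto)
  have dis: "A \<inter> ?B = {}" by (auto)
  have s1: "(\<Sum>i<m. p i - q i) = (\<Sum>i\<in>A. p i - q i) + (\<Sum>i\<in>?B. p i - q i)"
    by (subst un) (rule sum.union_disjoint[OF fA fB dis])
  have s2: "(\<Sum>i<m. \<bar>p i - q i\<bar>) = (\<Sum>i\<in>A. \<bar>p i - q i\<bar>) + (\<Sum>i\<in>?B. \<bar>p i - q i\<bar>)"
    by (subst un) (rule sum.union_disjoint[OF fA fB dis])
  have "(\<Sum>i\<in>A. p i - q i) \<le> (\<Sum>i\<in>A. \<bar>p i - q i\<bar>)" by (intro sum_mono) (auto)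
  moreover have "- (\<Sum>i\<in>?B. p i - q i) \<le> (\<Sum>i\<in>?B. \<bar>p i - q i\<bar>)"
    by (simp add: sum_negf[symmetric]) (intro sum_mono, auto)
  ultimately show ?thesis unfolding tv_dist_def using s1 s2 z by (simp)
qed

lemma density_facts: assumes "density n R"
  shows "R \<in> carrier_mat n n" "dag R = R" "mtrace R = 1"
  using assms unfolding density_def psd_def by (auto)

lemma proj_dim[simp]: "dim_row (proj v) = dim_vec v" "dim_col (proj v) = dim_vec v"
  by (simp_all add: proj_def)

lemma proj_carrier[simp]: "v \<in> carrier_vec n \<Longrightarrow> proj v \<in> carrier_mat n n"
  by (rule carrier_matI) (simp_all add: carrier_vecD)

lemma proj_index: "v \<in> carrier_vec n \<Longrightarrow> i < n \<Longrightarrow> j < n \<Longrightarrow> proj v $$ (i,j) = v $ i * cnj (v $ j)"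
  by (simp add: proj_def)

lemma proj_herm: "v \<in> carrier_vec n \<Longrightarrow> dag (proj v) = proj v"
  by (intro eq_matI) (auto simp: proj_def)

lemma mtrace_proj: "v \<in> carrier_vec n \<Longrightarrow> mtrace (proj v) = v \<bullet>c v"
  by (simp add: proj_def mtrace_def cinner_sum)

lemma proj_mult_vec: assumes a: "a \<in> carrier_vec n" and w: "w \<in> carrier_vec n"
  shows "proj a *\<^sub>v w = (w \<bullet>c a) \<cdot>\<^sub>v a"
proof (rule eq_vecI)
  fix i assume "i < dim_vec ((w \<bullet>c a) \<cdot>\<^sub>v a)"
  then have i: "i < n" using a by (simp)
  have "(proj a *\<^sub>v w) $ i = (\<Sum>j<n. a $ i * cnj (a $ j) * w $ j)"
    using a w i carrier_vecD[OF a] carrier_vecD[OF w] by (simp add: mult_vec_sum proj_index del: index_mult_mat_vec)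
  also have "\<dots> = a $ i * (w \<bullet>c a)" using a by (simp add: cinner_sum sum_distrib_left ac_simps)
  finally show "(proj a *\<^sub>v w) $ i = ((w \<bullet>c a) \<cdot>\<^sub>v a) $ i" using i a by (simp add: mult.commute)
qed (use a w in simp)

lemma mtrace_mult_proj: assumes F: "F \<in> carrier_mat n n" and a: "a \<in> carrier_vec n"
  shows "mtrace (F * proj a) = (F *\<^sub>v a) \<bullet>c a"
proof -
  have "mtrace (F * proj a) = (\<Sum>i<n. \<Sum>k<n. F $$ (i,k) * (a $ k * cnj (a $ i)))"
    unfolding mtrace_def using F a carrier_vecD[OF a] by (simp add: index_mult_sum proj_index del: index_mult_mat(1))
  also have "\<dots> = (\<Sum>i<n. (\<Sum>k<n. F $$ (i,k) * a $ k) * cnj (a $ i))"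
    by (simp add: sum_distrib_left sum_distrib_right ac_simps)
  also have "\<dots> = (F *\<^sub>v a) \<bullet>c a" using F a by (simp add: cinner_sum mult_vec_sum del: index_mult_mat_vec)
  finally show ?thesis .
qed

lemma proj_mult: assumes a: "a \<in> carrier_vec n" and b: "b \<in> carrier_vec n"
  shows "proj a * proj b = (b \<bullet>c a) \<cdot>\<^sub>m mat n n (\<lambda>(i,j). a $ i * cnj (b $ j))"
proof (rule eq_matI)
  fix i j assume "i < dim_row ((b \<bullet>c a) \<cdot>\<^sub>m mat n n (\<lambda>(i,j). a $ i * cnj (b $ j)))"
    "j < dim_col ((b \<bullet>c a) \<cdot>\<^sub>m mat n n (\<lambda>(i,j). a $ i * cnj (b $ j)))"
  then have i: "i < n" and j: "j < n" by (auto)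
  have "(proj a * proj b) $$ (i,j) = (\<Sum>k<n. a $ i * cnj (a $ k) * (b $ k * cnj (b $ j)))"
    using a b i j carrier_vecD[OF a] carrier_vecD[OF b] by (simp add: index_mult_sum proj_index del: index_mult_mat(1))
  also have "\<dots> = (b \<bullet>c a) * (a $ i * cnj (b $ j))" using a b by (simp add: cinner_sum sum_distrib_left sum_distrib_right ac_simps)
  finally show "(proj a * proj b) $$ (i,j) = ((b \<bullet>c a) \<cdot>\<^sub>m mat n n (\<lambda>(i,j). a $ i * cnj (b $ j))) $$ (i,j)"
    using i j by (simp)
qed (use a b in auto)

lemma proj_idem: "a \<in> carrier_vec n \<Longrightarrow> a \<bullet>c a = 1 \<Longrightarrow> proj a * proj a = proj a"
  by (subst proj_mult[of _ n]) (auto simp: proj_def)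

lemma proj_orth: "a \<in> carrier_vec n \<Longrightarrow> b \<in> carrier_vec n \<Longrightarrow> b \<bullet>c a = 0 \<Longrightarrow> proj a * proj b = 0\<^sub>m n n"
  by (subst proj_mult[of _ n]) (auto)

lemma proj_quad: assumes a: "a \<in> carrier_vec n" and w: "w \<in> carrier_vec n"
  shows "(proj a *\<^sub>v w) \<bullet>c w = complex_of_real ((Re (w \<bullet>c a))\<^sup>2 + (Im (w \<bullet>c a))\<^sup>2)"
proof -
  have "(proj a *\<^sub>v w) \<bullet>c w = (w \<bullet>c a) * (a \<bullet>c w)" using a w by (simp add: proj_mult_vec cinner_smult_left)
  also have "a \<bullet>c w = cnj (w \<bullet>c a)" using a w by (intro cinner_cnj) (simp)
  finally show ?thesis by (simp add: complex_mult_cnj)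
qed

lemma psd_proj_sum: assumes a: "a \<in> carrier_vec n" and b: "b \<in> carrier_vec n"
  shows "psd n (proj a + proj b)" "psd n (proj a)"
proof -
  have P: "proj a \<in> carrier_mat n n" and Q: "proj b \<in> carrier_mat n n" using a b by (auto)
  show "psd n (proj a + proj b)" unfolding psd_def
  proof (intro conjI ballI)
    show "proj a + proj b \<in> carrier_mat n n" using P Q by (simp)
    show "dag (proj a + proj b) = proj a + proj b" using dag_add[OF P Q] proj_herm a b by (simp)
    fix w :: "complex vec" assume w: "w \<in> carrier_vec n"
    have e: "((proj a + proj b) *\<^sub>v w) \<bullet>c w = (proj a *\<^sub>v w) \<bullet>c w + (proj b *\<^sub>v w) \<bullet>c w"
      using P Q w by (simp add: add_mult_distrib_mat_vec[OF P Q w] add_scalar_prod_distrib[of _ n])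
    show "Im (((proj a + proj b) *\<^sub>v w) \<bullet>c w) = 0" unfolding e using a b w by (simp add: proj_quad)
    show "0 \<le> Re (((proj a + proj b) *\<^sub>v w) \<bullet>c w)" unfolding e using a b w by (simp add: proj_quad)
  qed
  show "psd n (proj a)" unfolding psd_def
  proof (intro conjI ballI)
    show "proj a \<in> carrier_mat n n" using P .
    show "dag (proj a) = proj a" using proj_herm a by (simp)
    fix w :: "complex vec" assume w: "w \<in> carrier_vec n"
    show "Im ((proj a *\<^sub>v w) \<bullet>c w) = 0" using a w by (simp add: proj_quad)
    show "0 \<le> Re ((proj a *\<^sub>v w) \<bullet>c w)" using a w by (simp add: proj_quad)
  qed
qed

lemma pair_facts:
  assumes a: "a \<in> carrier_vec n" and b: "b \<in> carrier_vec n"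
    and aa: "a \<bullet>c a = 1" and bb: "b \<bullet>c b = 1" and ab: "a \<bullet>c b = 0"
  shows "density n (proj a)" "density n (proj b)" "trace_dist (proj a) (proj b) = 1"
proof -
  show "density n (proj a)" unfolding density_def using psd_proj_sum[OF a b] mtrace_proj[OF a] aa by (simp)
  show "density n (proj b)" unfolding density_def using psd_proj_sum[OF b a] mtrace_proj[OF b] bb by (simp)
  have ba: "b \<bullet>c a = 0" using ab cinner_cnj[of b a] a b by (simp)
  define P where "P = proj a"
  define Q where "Q = proj b"
  have P: "P \<in> carrier_mat n n" and Q: "Q \<in> carrier_mat n n" using a b by (auto simp: P_def Q_def)
  have PP: "P * P = P" and QQ: "Q * Q = Q" using proj_idem a b aa bb by (auto simp: P_def Q_def)
  have PQ: "P * Q = 0\<^sub>m n n" and QP: "Q * P = 0\<^sub>m n n" using proj_orth a b ab ba by (auto simp: P_def Q_def)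
  have X: "P - Q \<in> carrier_mat n n" "dag (P - Q) = P - Q"
    using P Q dag_minus[OF P Q] proj_herm a b by (auto simp: P_def Q_def)
  have TT: "(P + Q) * (P + Q) = P + Q"
  proof -
    have "(P + Q) * (P + Q) = P * (P + Q) + Q * (P + Q)" using add_mult_distrib_mat[OF P Q, of "P + Q" n] P Q by (simp)
    also have "\<dots> = (P * P + P * Q) + (Q * P + Q * Q)"
      using mult_add_distrib_mat[OF P P Q] mult_add_distrib_mat[OF Q P Q] by (simp)
    also have "\<dots> = P + Q" unfolding PP QQ PQ QP using P Q by (intro eq_matI) (auto)
    finally show ?thesis .
  qed
  have XX: "(P - Q) * (P - Q) = P + Q"
  proof -
    have "(P - Q) * (P - Q) = P * (P - Q) - Q * (P - Q)" using minus_mult_distrib_mat[OF P Q, of "P - Q" n] P Q by (simp)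
    also have "\<dots> = (P * P - P * Q) - (Q * P - Q * Q)"
      using mult_minus_distrib_mat[OF P P Q] mult_minus_distrib_mat[OF Q P Q] by (simp)
    also have "\<dots> = P + Q" unfolding PP QQ PQ QP using P Q by (intro eq_matI) (auto)
    finally show ?thesis .
  qed
  have T: "psd n (P + Q)" using psd_proj_sum[OF a b] by (simp add: P_def Q_def)
  have "mabs (P - Q) = P + Q" using mabs_eq[OF X T] TT XX by (simp)
  then have "trace_norm (P - Q) = 2" unfolding trace_norm_def
    using mtrace_add[OF P Q] mtrace_proj[OF a] mtrace_proj[OF b] aa bb by (simp add: P_def Q_def)
  then show "trace_dist (proj a) (proj b) = 1" unfolding trace_dist_def P_def Q_def by (simp)
qed

lemma eig_orth: fixes M :: "complex mat"
  assumes M: "M \<in> carrier_mat n n" "dag M = M" and v: "v \<in> carrier_vec n" and w: "w \<in> carrier_vec n"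
    and ev: "M *\<^sub>v v = complex_of_real a \<cdot>\<^sub>v v" and ew: "M *\<^sub>v w = complex_of_real b \<cdot>\<^sub>v w" and ab: "a \<noteq> b"
  shows "v \<bullet>c w = 0"
proof -
  have "complex_of_real a * (v \<bullet>c w) = (M *\<^sub>v v) \<bullet>c w" using ev v w by (simp add: cinner_smult_left)
  also have "\<dots> = v \<bullet>c (M *\<^sub>v w)" using cinner_mult_dag[OF M(1) v w] M(2) by (simp)
  also have "\<dots> = complex_of_real b * (v \<bullet>c w)" using ew v w by (simp add: cinner_smult_right)
  finally have h: "complex_of_real a * (v \<bullet>c w) = complex_of_real b * (v \<bullet>c w)" .
  have "complex_of_real a \<noteq> complex_of_real b" using ab by (simp)
  then show ?thesis using h by (simp)
qed

lemma sum_diff_zero: assumes model: "decision_model n Es Ms" and R: "density n R" and S: "density n S"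
  shows "(\<Sum>i<length Ms. model_out n Es Ms R i - model_out n Es Ms S i) = 0"
  using sum_model_out[OF model density_facts(1)[OF R]] sum_model_out[OF model density_facts(1)[OF S]]
    density_facts(3)[OF R] density_facts(3)[OF S] by (simp add: sum_subtractf)

lemma main_bound:
  fixes R S :: "complex mat"
  assumes model: "decision_model n Es Ms" and rho: "density n R" and sig: "density n S"
  shows "\<exists>A \<subseteq> {..<length Ms}. tv_dist (length Ms) (model_out n Es Ms R) (model_out n Es Ms S)
            \<le> (lambda_max (M_set n Es Ms A) - lambda_min (M_set n Es Ms A)) * trace_dist R S"
    "0 \<le> trace_dist R S"
proof -
  note Rf = density_facts[OF rho] and Sf = density_facts[OF sig]
  define X where "X = R - S"
  have X: "X \<in> carrier_mat n n" "dag X = X" using Rf Sf dag_minus[OF Rf(1) Sf(1)] by (auto simp: X_def)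
  obtain U d where U: "U \<in> carrier_mat n n" "dag U * U = 1\<^sub>m n" "U * dag U = 1\<^sub>m n"
    and Xd: "X = U * dmat n d * dag U" using spectral[OF X] by (blast)
  have "mtrace X = 0" using mtrace_minus[OF Rf(1) Sf(1)] Rf(3) Sf(3) by (simp add: X_def)
  then have "complex_of_real (\<Sum>l<n. d l) = 0" using mtrace_conj[OF U(1,2)] Xd by (simp)
  then have d0: "(\<Sum>l<n. d l) = 0" by (simp only: of_real_eq_0_iff)
  have tn: "trace_norm X = (\<Sum>l<n. \<bar>d l\<bar>)" using trace_norm_decomp[OF X U Xd] .
  have td: "trace_dist R S = (\<Sum>l<n. \<bar>d l\<bar>) / 2" using tn by (simp add: trace_dist_def X_def)
  have "0 \<le> (\<Sum>l<n. \<bar>d l\<bar>)" by (simp add: sum_nonneg)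
  then show "0 \<le> trace_dist R S" unfolding td by simp
  define p where "p = model_out n Es Ms R"
  define q where "q = model_out n Es Ms S"
  define m where "m = length Ms"
  have z: "(\<Sum>i<m. p i - q i) = 0" using sum_diff_zero[OF model rho sig] by (simp add: p_def q_def m_def)
  define P where "P = {i. i < m \<and> q i \<le> p i}"
  have Psub: "P \<subseteq> {..<m}" by (auto simp: P_def)
  have "tv_dist m p q = (\<Sum>i\<in>P. p i - q i)" using tv_upper[OF z] by (simp add: P_def)
  also have "\<dots> = (\<Sum>i\<in>P. Re (mtrace (Fop n Es Ms i * X)))"
  proof (rule sum.cong)
    fix i assume "i \<in> P"
    then have i: "i < length Ms" by (simp add: P_def m_def)
    have F: "Fop n Es Ms i \<in> carrier_mat n n" using Fop_carrier[OF model i] .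
    have "Fop n Es Ms i * X = Fop n Es Ms i * R - Fop n Es Ms i * S"
      unfolding X_def using mult_minus_distrib_mat[OF F Rf(1) Sf(1)] .
    then have "mtrace (Fop n Es Ms i * X) = mtrace (Fop n Es Ms i * R) - mtrace (Fop n Es Ms i * S)"
      using mtrace_minus[OF mult_carrier_nn[OF F Rf(1)] mult_carrier_nn[OF F Sf(1)]] by (simp)
    then show "p i - q i = Re (mtrace (Fop n Es Ms i * X))"
      unfolding p_def q_def using model_out_Fop[OF model i Rf(1)] model_out_Fop[OF model i Sf(1)] by (simp)
  qed simp
  also have "\<dots> = Re (mtrace (M_set n Es Ms P * X))"
    using mtrace_M_set[OF model Psub[unfolded m_def] X(1)] by (simp add: Re_sum)
  also have "\<dots> \<le> (lambda_max (M_set n Es Ms P) - lambda_min (M_set n Es Ms P)) / 2 * (\<Sum>l<n. \<bar>d l\<bar>)"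
    unfolding Xd using trace_bound[OF M_set_carrier[OF model Psub[unfolded m_def]] M_set_herm[OF model Psub[unfolded m_def]] U d0] .
  also have "\<dots> = (lambda_max (M_set n Es Ms P) - lambda_min (M_set n Es Ms P)) * trace_dist R S"
    using td by (simp)
  finally show "\<exists>A \<subseteq> {..<length Ms}. tv_dist (length Ms) (model_out n Es Ms R) (model_out n Es Ms S)
            \<le> (lambda_max (M_set n Es Ms A) - lambda_min (M_set n Es Ms A)) * trace_dist R S"
    using Psub unfolding p_def q_def m_def by (blast)
qed

lemma pair_value:
  assumes model: "decision_model n Es Ms" and A: "A \<subseteq> {..<length Ms}"
    and a: "a \<in> carrier_vec n" and b: "b \<in> carrier_vec n" and aa: "a \<bullet>c a = 1" and bb: "b \<bullet>c b = 1"
    and ea: "M_set n Es Ms A *\<^sub>v a = complex_of_real (lambda_max (M_set n Es Ms A)) \<cdot>\<^sub>v a"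
    and eb: "M_set n Es Ms A *\<^sub>v b = complex_of_real (lambda_min (M_set n Es Ms A)) \<cdot>\<^sub>v b"
  shows "(\<Sum>i\<in>A. model_out n Es Ms (proj a) i - model_out n Es Ms (proj b) i)
     = lambda_max (M_set n Es Ms A) - lambda_min (M_set n Es Ms A)"
proof -
  define M where "M = M_set n Es Ms A"
  have M: "M \<in> carrier_mat n n" using M_set_carrier[OF model A] by (simp add: M_def)
  have Pa: "proj a \<in> carrier_mat n n" and Pb: "proj b \<in> carrier_mat n n" using a b by (auto)
  have "(\<Sum>i\<in>A. model_out n Es Ms (proj a) i - model_out n Es Ms (proj b) i)
      = (\<Sum>i\<in>A. Re (mtrace (Fop n Es Ms i * proj a))) - (\<Sum>i\<in>A. Re (mtrace (Fop n Es Ms i * proj b)))"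
    unfolding sum_subtractf[symmetric]
    using model_out_Fop[OF model _ Pa] model_out_Fop[OF model _ Pb] A by (intro sum.cong) (auto)
  also have "\<dots> = Re (mtrace (M * proj a)) - Re (mtrace (M * proj b))"
    using mtrace_M_set[OF model A Pa] mtrace_M_set[OF model A Pb] by (simp add: Re_sum M_def)
  also have "\<dots> = Re ((M *\<^sub>v a) \<bullet>c a) - Re ((M *\<^sub>v b) \<bullet>c b)"
    using mtrace_mult_proj[OF M a] mtrace_mult_proj[OF M b] by (simp)
  also have "\<dots> = lambda_max M - lambda_min M"
    using ea eb a b aa bb by (simp add: M_def cinner_smult_left)
  finally show ?thesis by (simp add: M_def)
qed

lemma lam_min_le_max: fixes A :: "complex mat"
  assumes "A \<in> carrier_mat n n" "dag A = A" "0 < n"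
  shows "lambda_min A \<le> lambda_max A"
  using lambda_max_props(2)[OF assms lambda_max_props(3)[OF assms]] by (simp)

lemma eigvec_of_eigval: fixes A :: "complex mat"
  assumes A: "A \<in> carrier_mat n n" and ev: "eigenvalue A k"
  shows "\<exists>v. v \<in> carrier_vec n \<and> v \<bullet>c v = 1 \<and> A *\<^sub>v v = k \<cdot>\<^sub>v v"
proof -
  obtain v where v: "v \<in> carrier_vec n" "v \<noteq> 0\<^sub>v n" "A *\<^sub>v v = k \<cdot>\<^sub>v v"
    using ev A unfolding eigenvalue_def eigenvector_def by (auto)
  obtain c where c: "c \<noteq> 0" "(c \<cdot>\<^sub>v v) \<bullet>c (c \<cdot>\<^sub>v v) = 1" using normalize_vec[OF v(1,2)] by (auto)
  have "A *\<^sub>v (c \<cdot>\<^sub>v v) = k \<cdot>\<^sub>v (c \<cdot>\<^sub>v v)"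
    using A v by (simp add: mult_mat_vec smult_smult_assoc mult.commute)
  then show ?thesis using c v by (intro exI[of _ "c \<cdot>\<^sub>v v"]) auto
qed

theorem theorem3:
  fixes n :: nat and Es Ms :: "complex mat list"
  defines "Kstar \<equiv> Max ((\<lambda>A. lambda_max (M_set n Es Ms A) - lambda_min (M_set n Es Ms A))
                          ` Pow {..<length Ms})"
  assumes n: "0 < n"
    and model: "decision_model n Es Ms"
  shows "Kstar \<in> lipschitz_bounds n Es Ms \<and> (\<forall>K \<in> lipschitz_bounds n Es Ms. Kstar \<le> K) \<and>
    (\<forall>Astar \<psi> \<phi>.
       Astar \<subseteq> {..<length Ms} \<longrightarrow>
       lambda_max (M_set n Es Ms Astar) - lambda_min (M_set n Es Ms Astar) = Kstar \<longrightarrow>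
       \<psi> \<in> carrier_vec n \<longrightarrow> \<phi> \<in> carrier_vec n \<longrightarrow>
       \<psi> \<bullet>c \<psi> = 1 \<longrightarrow> \<phi> \<bullet>c \<phi> = 1 \<longrightarrow>
       eigenvector (M_set n Es Ms Astar) \<psi> (complex_of_real (lambda_max (M_set n Es Ms Astar))) \<longrightarrow>
       eigenvector (M_set n Es Ms Astar) \<phi> (complex_of_real (lambda_min (M_set n Es Ms Astar))) \<longrightarrow>
       \<psi> \<bullet>c \<phi> = 0 \<longrightarrow>
       tv_dist (length Ms) (model_out n Es Ms (proj \<psi>)) (model_out n Es Ms (proj \<phi>))
         = Kstar * trace_dist (proj \<psi>) (proj \<phi>) \<and>
       Kstar * trace_dist (proj \<psi>) (proj \<phi>) = Kstar)"
proof -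
  define val where "val A = lambda_max (M_set n Es Ms A) - lambda_min (M_set n Es Ms A)" for A
  define m where "m = length Ms"
  have KS: "Kstar = Max (val ` Pow {..<m})" unfolding Kstar_def val_def m_def ..
  have fin: "finite (val ` Pow {..<m})" by (simp)
  have ne: "val ` Pow {..<m} \<noteq> {}" by (auto)
  have le: "val A \<le> Kstar" if "A \<subseteq> {..<m}" for A
    unfolding KS using fin that by (intro Max_ge) (auto)
  obtain Aopt where Aopt: "Aopt \<subseteq> {..<m}" "val Aopt = Kstar"
    using Max_in[OF fin ne] unfolding KS[symmetric] by (auto)
  have Mc: "M_set n Es Ms A \<in> carrier_mat n n" "dag (M_set n Es Ms A) = M_set n Es Ms A" if "A \<subseteq> {..<m}" for A
    using M_set_carrier[OF model] M_set_herm[OF model] that by (auto simp: m_def)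
  have val0: "0 \<le> val A" if "A \<subseteq> {..<m}" for A
    using lam_min_le_max[OF Mc[OF that] n] by (simp add: val_def)
  have K0: "0 \<le> Kstar" using val0[of "{}"] le[of "{}"] by (simp)
  have pairK: "Kstar \<le> tv_dist m (model_out n Es Ms (proj a)) (model_out n Es Ms (proj b)) \<and>
      density n (proj a) \<and> density n (proj b) \<and> trace_dist (proj a) (proj b) = 1"
    if A: "A \<subseteq> {..<m}" "val A = Kstar" and a: "a \<in> carrier_vec n" and b: "b \<in> carrier_vec n"
      and aa: "a \<bullet>c a = 1" and bb: "b \<bullet>c b = 1" and ab: "a \<bullet>c b = 0"
      and ea: "M_set n Es Ms A *\<^sub>v a = complex_of_real (lambda_max (M_set n Es Ms A)) \<cdot>\<^sub>v a"
      and eb: "M_set n Es Ms A *\<^sub>v b = complex_of_real (lambda_min (M_set n Es Ms A)) \<cdot>\<^sub>v b"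
    for A a b
  proof -
    note pf = pair_facts[OF a b aa bb ab]
    have "(\<Sum>i\<in>A. model_out n Es Ms (proj a) i - model_out n Es Ms (proj b) i) = Kstar"
      using pair_value[OF model _ a b aa bb ea eb] A by (simp add: m_def val_def)
    moreover have "(\<Sum>i\<in>A. model_out n Es Ms (proj a) i - model_out n Es Ms (proj b) i)
        \<le> tv_dist m (model_out n Es Ms (proj a)) (model_out n Es Ms (proj b))"
      using tv_lower[OF sum_diff_zero[OF model pf(1,2)]] A by (simp add: m_def)
    ultimately show ?thesis using pf by (simp)
  qed
  have bound: "tv_dist m (model_out n Es Ms R) (model_out n Es Ms S) \<le> Kstar * trace_dist R S"
    if R: "density n R" and S: "density n S" for R S
  proof -
    obtain A where A: "A \<subseteq> {..<m}"
      and tvA: "tv_dist m (model_out n Es Ms R) (model_out n Es Ms S) \<le> val A * trace_dist R S"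
      using main_bound(1)[OF model R S] by (auto simp: m_def val_def)
    have "val A * trace_dist R S \<le> Kstar * trace_dist R S"
      using le[OF A] main_bound(2)[OF model R S] by (rule mult_right_mono)
    then show ?thesis using tvA by (simp)
  qed
  have part1: "Kstar \<in> lipschitz_bounds n Es Ms"
    unfolding lipschitz_bounds_def using K0 bound by (simp add: m_def)
  have part2: "Kstar \<le> K" if K: "K \<in> lipschitz_bounds n Es Ms" for K
  proof -
    have K0': "0 \<le> K" and Kb: "\<And>R S. density n R \<Longrightarrow> density n S \<Longrightarrow>
        tv_dist m (model_out n Es Ms R) (model_out n Es Ms S) \<le> K * trace_dist R S"
      using K unfolding lipschitz_bounds_def m_def by (auto)
    define M where "M = M_set n Es Ms Aopt"
    have M: "M \<in> carrier_mat n n" "dag M = M" using Mc[OF Aopt(1)] by (auto simp: M_def)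
    show ?thesis
    proof (cases "lambda_max M = lambda_min M")
      case True
      then have "Kstar = 0" using Aopt(2) by (simp add: val_def M_def)
      then show ?thesis using K0' by (simp)
    next
      case False
      obtain a where a: "a \<in> carrier_vec n" "a \<bullet>c a = 1" "M *\<^sub>v a = complex_of_real (lambda_max M) \<cdot>\<^sub>v a"
        using eigvec_of_eigval[OF M(1) lambda_max_props(1)[OF M n]] by (blast)
      obtain b where b: "b \<in> carrier_vec n" "b \<bullet>c b = 1" "M *\<^sub>v b = complex_of_real (lambda_min M) \<cdot>\<^sub>v b"
        using eigvec_of_eigval[OF M(1) lambda_max_props(3)[OF M n]] by (blast)
      have ab: "a \<bullet>c b = 0" using eig_orth[OF M a(1) b(1) a(3) b(3) False] .
      note pk = pairK[OF Aopt a(1) b(1) a(2) b(2) ab a(3)[unfolded M_def] b(3)[unfolded M_def]]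
      have "tv_dist m (model_out n Es Ms (proj a)) (model_out n Es Ms (proj b)) \<le> K"
        using Kb[of "proj a" "proj b"] pk by (simp)
      then show ?thesis using pk by (simp)
    qed
  qed
  have part3: "tv_dist (length Ms) (model_out n Es Ms (proj \<psi>)) (model_out n Es Ms (proj \<phi>))
         = Kstar * trace_dist (proj \<psi>) (proj \<phi>) \<and>
       Kstar * trace_dist (proj \<psi>) (proj \<phi>) = Kstar"
    if A: "Astar \<subseteq> {..<length Ms}" "lambda_max (M_set n Es Ms Astar) - lambda_min (M_set n Es Ms Astar) = Kstar"
      and a: "\<psi> \<in> carrier_vec n" and b: "\<phi> \<in> carrier_vec n" and aa: "\<psi> \<bullet>c \<psi> = 1" and bb: "\<phi> \<bullet>c \<phi> = 1"
      and ea: "eigenvector (M_set n Es Ms Astar) \<psi> (complex_of_real (lambda_max (M_set n Es Ms Astar)))"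
      and eb: "eigenvector (M_set n Es Ms Astar) \<phi> (complex_of_real (lambda_min (M_set n Es Ms Astar)))"
      and ab: "\<psi> \<bullet>c \<phi> = 0"
    for Astar \<psi> \<phi>
  proof -
    have A': "Astar \<subseteq> {..<m}" "val Astar = Kstar" using A by (auto simp: m_def val_def)
    note pk = pairK[OF A' a b aa bb ab ea[unfolded eigenvector_def, THEN conjunct2, THEN conjunct2]
        eb[unfolded eigenvector_def, THEN conjunct2, THEN conjunct2]]
    have "tv_dist m (model_out n Es Ms (proj \<psi>)) (model_out n Es Ms (proj \<phi>)) \<le> Kstar"
      using bound[of "proj \<psi>" "proj \<phi>"] pk by (simp)
    then show ?thesis using pk by (simp add: m_def)
  qed
  show ?thesis using part1 part2 part3 by (blast)
qed

end
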